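(* Let $v_1\ge v_2>0$, $m\in\mathbb{Z}_{\ge1}$, $0<b<m$ and $\alpha\in(0,1)$. A strategy profile $(X,Y)$ with $\mathbf{E}(X)=m+\alpha$ and $\mathbf{E}(Y)=b$ is a Nash equilibrium of the discrete all-pay auction with valuations $v_1,v_2$ if and only if $\frac{v_1}{2}>\lceil v_2/2\rceil>\frac{v_2}{2}$, $m=\lceil v_2/2\rceil-1$, $b=\frac{(\lceil v_2/2\rceil-1)\lceil v_2/2\rceil}{v_1/2}$, $\alpha=\frac{\lceil v_2/2\rceil}{v_2/2}\left(\frac{v_2}{2}-\lfloor v_2/2\rfloor\right)$, $Y=\left(1-\frac bm\right)\delta_0+\frac bmU_{\mathrm{E}}^m$, and $X\in\mathrm{conv}\big(\{(1-\alpha)U_{\mathrm{O}}^m+\alpha U_{\mathrm{O}}^{m+1}\}\cup\mathcal{X}^{m,\alpha}\big)$, where, with $\delta=\frac{2\lceil v_2/2\rceil-1}{\lceil v_2/2\rceil}$ and $\sigma=\frac{2\lceil v_2/2\rceil-1}{\lceil v_2/2\rceil-1}$: $\mathcal{X}^{m,\alpha}=\{\alpha\delta V_j^m+(1-\alpha\delta)U_{\mathrm{O}}^m:1\le j\le m\}$ if $v_2/2\le\lceil v_2/2\rceil-\frac12$, and $\mathcal{X}^{m,\alpha}=\{(1-\alpha)\sigma V_j^m+(1-(1-\alpha)\sigma)U_{\mathrm{O}}^{m+1}:1\le j\le m\}$ if $v_2/2>\lceil v_2/2\rceil-\frac12$. In this case $P^1(X,Y)=v_1+1-2\lceil v_2/2\rceil$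 and $P^2(Y,X)=0$.
   Context: Discrete all-pay auction: two players, 1 and 2, value a prize at $v_1$ and $v_2$ respectively, where $v_1\ge v_2>0$. A (mixed) strategy is a probability distribution on $\mathbb{Z}_{\ge 0}$ with finite mean, identified with a $\mathbb{Z}_{\ge0}$-valued random variable; the two players' choices are independent. If player 1 uses $X$ and player 2 uses $Y$, the expected payoffs are $P^1(X,Y)=v_1\Pr(X>Y)+\frac{v_1}{2}\Pr(X=Y)-\mathbf{E}(X)$ and $P^2(Y,X)=v_2\Pr(Y>X)+\frac{v_2}{2}\Pr(X=Y)-\mathbf{E}(Y)$. A Nash equilibrium of the all-pay auction is a pair $(X,Y)$ with $P^1(X,Y)\ge P^1(X',Y)$ and $P^2(Y,X)\ge P^2(Y',X)$ for all strategies $X',Y'$. $\delta_j$ denotes the point mass at $j$; $\lambda A+(1-\lambda)B$ denotes the mixture of distributions $A$ and $B$; $\mathrm{conv}$ denotes the set of all finite mixtures. Special distributions: for $m\ge1$, $U_{\mathrm{O}}^m$ is the uniform distribution on $\{1,3,\dots,2m-1\}$; for $m\ge0$, $U_{\mathrm{E}}^m$ is the uniform distribution on $\{0,2,\dots,2m\}$; for $m\ge1$ and $1\le j\le m$, $V_j^m=\sum_{i=1}^{j-1}\frac{2}{2m+1}\delta_{2i-1}+\frac{1}{2m+1}\delta_{2j-1}+\sum_{i=j}^{m}\frac{2}{2m+1}\delta_{2i}$. *)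

theory Defs
  imports "HOL-Probability.Probability"
begin

definition strategy :: "nat pmf \<Rightarrow> bool" where
  "strategy X \<longleftrightarrow> integrable (measure_pmf X) real"

definition mean :: "nat pmf \<Rightarrow> real" where
  "mean X = measure_pmf.expectation X real"

definition payoff1 :: "real \<Rightarrow> nat pmf \<Rightarrow> nat pmf \<Rightarrow> real" where
  "payoff1 v1 X Y =
     v1 * measure_pmf.prob (pair_pmf X Y) {(x, y). x > y}
     + v1 / 2 * measure_pmf.prob (pair_pmf X Y) {(x, y). x = y}
     - mean X"

definition payoff2 :: "real \<Rightarrow> nat pmf \<Rightarrow> nat pmf \<Rightarrow> real" where
  "payoff2 v2 Y X =
     v2 * measure_pmf.prob (pair_pmf X Y) {(x, y). y > x}
     + v2 / 2 * measure_pmf.prob (pair_pmf X Y) {(x, y). x = y}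
     - mean Y"

definition nash :: "real \<Rightarrow> real \<Rightarrow> nat pmf \<Rightarrow> nat pmf \<Rightarrow> bool" where
  "nash v1 v2 X Y \<longleftrightarrow> strategy X \<and> strategy Y \<and>
     (\<forall>X'. strategy X' \<longrightarrow> payoff1 v1 X' Y \<le> payoff1 v1 X Y) \<and>
     (\<forall>Y'. strategy Y' \<longrightarrow> payoff2 v2 Y' X \<le> payoff2 v2 Y X)"

text \<open>Mixture \<open>l A + (1 - l) B\<close> (meant for \<open>0 \<le> l \<le> 1\<close>).\<close>
definition mix :: "real \<Rightarrow> 'a pmf \<Rightarrow> 'a pmf \<Rightarrow> 'a pmf" where
  "mix l A B = bind_pmf (bernoulli_pmf l) (\<lambda>b. if b then A else B)"

definition conv_pmf :: "'a pmf set \<Rightarrow> 'a pmf set" where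
  "conv_pmf S = {join_pmf Q | Q. finite (set_pmf Q) \<and> set_pmf Q \<subseteq> S}"

definition UO :: "nat \<Rightarrow> nat pmf" where
  "UO m = pmf_of_set ((\<lambda>i. 2 * i - 1) ` {1..m})"

definition UE :: "nat \<Rightarrow> nat pmf" where
  "UE m = pmf_of_set ((\<lambda>i. 2 * i) ` {0..m})"

definition V :: "nat \<Rightarrow> nat \<Rightarrow> nat pmf" where
  "V m j = embed_pmf (\<lambda>k.
      (\<Sum>i\<in>{1..<j}. if k = 2 * i - 1 then 2 / (2 * real m + 1) else 0)
      + (if k = 2 * j - 1 then 1 / (2 * real m + 1) else 0)
      + (\<Sum>i\<in>{j..m}. if k = 2 * i then 2 / (2 * real m + 1) else 0))"

end

theory Submission
  imports Defs
begin


lemma prob_pair_fst: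
  "measure_pmf.prob (pair_pmf X Y) A = measure_pmf.expectation X (\<lambda>x. measure_pmf.prob Y {y. (x, y) \<in> A})"
proof -
  have "emeasure (measure_pmf (pair_pmf X Y)) A = (\<integral>\<^sup>+ z. indicator A z \<partial>measure_pmf (pair_pmf X Y))"
    by (simp add: nn_integral_indicator)
  also have "\<dots> = (\<integral>\<^sup>+ a. \<integral>\<^sup>+ b. indicator A (a, b) \<partial>measure_pmf Y \<partial>measure_pmf X)"
    by (rule nn_integral_pair_pmf')
  also have "\<dots> = (\<integral>\<^sup>+ a. emeasure (measure_pmf Y) {b. (a, b) \<in> A} \<partial>measure_pmf X)"
  proof (intro nn_integral_cong)
    fix a
    have "(\<lambda>b. indicator A (a, b) :: ennreal) = indicator {b. (a, b) \<in> A}"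
      by (auto simp: indicator_def)
    thus "(\<integral>\<^sup>+ b. indicator A (a, b) \<partial>measure_pmf Y) = emeasure (measure_pmf Y) {b. (a, b) \<in> A}"
      by (simp add: nn_integral_indicator)
  qed
  also have "\<dots> = (\<integral>\<^sup>+ a. ennreal (measure_pmf.prob Y {b. (a, b) \<in> A}) \<partial>measure_pmf X)"
    by (simp add: measure_pmf.emeasure_eq_measure)
  finally have e: "emeasure (measure_pmf (pair_pmf X Y)) A =
     (\<integral>\<^sup>+ a. ennreal (measure_pmf.prob Y {b. (a, b) \<in> A}) \<partial>measure_pmf X)" .
  have "measure_pmf.prob (pair_pmf X Y) A = enn2real (emeasure (measure_pmf (pair_pmf X Y)) A)"
    by (simp add: measure_def)
  also have "\<dots> = measure_pmf.expectation X (\<lambda>x. measure_pmf.prob Y {y. (x, y) \<in> A})"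
    unfolding e by (rule enn2real_nn_integral_eq_integral) auto
  finally show ?thesis .
qed

lemma prob_pair_snd:
  "measure_pmf.prob (pair_pmf X Y) A = measure_pmf.expectation Y (\<lambda>y. measure_pmf.prob X {x. (x, y) \<in> A})"
proof -
  have "pair_pmf X Y = map_pmf (\<lambda>(a, b). (b, a)) (pair_pmf Y X)" by (rule pair_commute_pmf)
  hence "measure_pmf.prob (pair_pmf X Y) A = measure_pmf.prob (pair_pmf Y X) ((\<lambda>(a, b). (b, a)) -` A)"
    by (simp add: measure_map_pmf)
  also have "\<dots> = measure_pmf.expectation Y (\<lambda>y. measure_pmf.prob X {x. (y, x) \<in> (\<lambda>(a, b). (b, a)) -` A})"
    by (rule prob_pair_fst)
  finally show ?thesis by simp
qed

definition u1 :: "real \<Rightarrow> nat pmf \<Rightarrow> nat \<Rightarrow> real" where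
  "u1 v Y k = v * (\<Sum>i<k. pmf Y i) + v / 2 * pmf Y k - real k"

lemma int_bounded: "(\<And>x. \<bar>f x\<bar> \<le> B) \<Longrightarrow> integrable (measure_pmf M) (f :: 'a \<Rightarrow> real)"
  by (rule measure_pmf.integrable_const_bound[where B=B]) auto

lemma sum_pmf_le1: "(\<Sum>i\<in>A. pmf M i) \<le> 1" if "finite A"
  using measure_measure_pmf_finite[OF that, of M] measure_pmf.prob_le_1[of M A] by simp

lemma payoff1_eq:
  assumes "strategy X"
  shows "payoff1 v X Y = measure_pmf.expectation X (u1 v Y)"
proof -
  have a: "measure_pmf.prob (pair_pmf X Y) {(x, y). y < x} = measure_pmf.expectation X (\<lambda>x. (\<Sum>i<x. pmf Y i))"
    unfolding prob_pair_fst by (simp add: measure_measure_pmf_finite lessThan_def)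
  have b: "measure_pmf.prob (pair_pmf X Y) {(x, y). x = y} = measure_pmf.expectation X (\<lambda>x. pmf Y x)"
    unfolding prob_pair_fst by (simp add: measure_pmf_single)
  have i1: "integrable (measure_pmf X) (\<lambda>x. (\<Sum>i<x. pmf Y i))"
    by (rule int_bounded[where B=1]) (simp add: sum_pmf_le1 sum_nonneg)
  have i2: "integrable (measure_pmf X) (\<lambda>x. pmf Y x)"
    by (rule int_bounded[where B=1]) (simp add: pmf_le_1)
  have i3: "integrable (measure_pmf X) real" using assms unfolding strategy_def .
  show ?thesis unfolding payoff1_def a b mean_def u1_def
    using i1 i2 i3 by (simp add: integral_diff integral_add integral_mult_right_zero)
qed

lemma payoff2_eq:
  assumes "strategy Y"
  shows "payoff2 v Y X = measure_pmf.expectation Y (u1 v X)"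
proof -
  have a: "measure_pmf.prob (pair_pmf X Y) {(x, y). x < y} = measure_pmf.expectation Y (\<lambda>y. (\<Sum>i<y. pmf X i))"
    unfolding prob_pair_snd by (simp add: measure_measure_pmf_finite lessThan_def)
  have b: "measure_pmf.prob (pair_pmf X Y) {(x, y). x = y} = measure_pmf.expectation Y (\<lambda>y. pmf X y)"
    unfolding prob_pair_snd by (simp add: measure_pmf_single)
  have i1: "integrable (measure_pmf Y) (\<lambda>x. (\<Sum>i<x. pmf X i))"
    by (rule int_bounded[where B=1]) (simp add: sum_pmf_le1 sum_nonneg)
  have i2: "integrable (measure_pmf Y) (\<lambda>x. pmf X x)"
    by (rule int_bounded[where B=1]) (simp add: pmf_le_1)
  have i3: "integrable (measure_pmf Y) real" using assms unfolding strategy_def .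
  show ?thesis unfolding payoff2_def a b mean_def u1_def
    using i1 i2 i3 by (simp add: integral_diff integral_add integral_mult_right_zero)
qed

lemma strategy_return: "strategy (return_pmf k)"
  unfolding strategy_def by (rule integrable_measure_pmf_finite) simp

lemma integrable_u1: "strategy X \<Longrightarrow> integrable (measure_pmf X) (u1 v Y)"
proof -
  assume "strategy X"
  hence i3: "integrable (measure_pmf X) real" unfolding strategy_def .
  have i1: "integrable (measure_pmf X) (\<lambda>x. (\<Sum>i<x. pmf Y i))"
    by (rule int_bounded[where B=1]) (simp add: sum_pmf_le1 sum_nonneg)
  have i2: "integrable (measure_pmf X) (\<lambda>x. pmf Y x)"
    by (rule int_bounded[where B=1]) (simp add: pmf_le_1)
  show ?thesis unfolding u1_def using i1 i2 i3 by simp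
qed

lemma best_response:
  assumes X: "strategy X" and le: "\<And>k. u1 v Y k \<le> p" and eq: "\<And>k. k \<in> set_pmf X \<Longrightarrow> u1 v Y k = p"
  shows "measure_pmf.expectation X (u1 v Y) = p"
    and "\<And>X'. strategy X' \<Longrightarrow> measure_pmf.expectation X' (u1 v Y) \<le> p"
proof -
  have "measure_pmf.expectation X (u1 v Y) = measure_pmf.expectation X (\<lambda>_. p)"
    by (intro integral_cong_AE) (auto simp: AE_measure_pmf_iff eq)
  thus "measure_pmf.expectation X (u1 v Y) = p" by simp
  fix X' assume "strategy X'"
  thus "measure_pmf.expectation X' (u1 v Y) \<le> p"
    by (intro measure_pmf.integral_le_const integrable_u1) (auto simp: le)
qed

lemma nash_pointwise:
  assumes "nash v1 v2 X Y"
  shows "\<And>k. u1 v1 Y k \<le> payoff1 v1 X Y" "\<And>k. k \<in> set_pmf X \<Longrightarrow> u1 v1 Y k = payoff1 v1 X Y"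
    "\<And>k. u1 v2 X k \<le> payoff2 v2 Y X" "\<And>k. k \<in> set_pmf Y \<Longrightarrow> u1 v2 X k = payoff2 v2 Y X"
proof -
  have X: "strategy X" and Y: "strategy Y"
    and b1: "\<And>X'. strategy X' \<Longrightarrow> payoff1 v1 X' Y \<le> payoff1 v1 X Y"
    and b2: "\<And>Y'. strategy Y' \<Longrightarrow> payoff2 v2 Y' X \<le> payoff2 v2 Y X"
    using assms unfolding nash_def by auto
  show le1: "\<And>k. u1 v1 Y k \<le> payoff1 v1 X Y"
    using b1[OF strategy_return] payoff1_eq[OF strategy_return] by simp
  show le2: "\<And>k. u1 v2 X k \<le> payoff2 v2 Y X"
    using b2[OF strategy_return] payoff2_eq[OF strategy_return] by simp
  have z1: "measure_pmf.expectation X (\<lambda>k. payoff1 v1 X Y - u1 v1 Y k) = 0"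
    using payoff1_eq[OF X] integrable_u1[OF X] by (simp add: integral_diff)
  have "AE k in measure_pmf X. payoff1 v1 X Y - u1 v1 Y k = 0"
    using z1 integrable_u1[OF X] le1
    by (subst integral_nonneg_eq_0_iff_AE[symmetric]) auto
  thus "\<And>k. k \<in> set_pmf X \<Longrightarrow> u1 v1 Y k = payoff1 v1 X Y" by (simp add: AE_measure_pmf_iff)
  have z2: "measure_pmf.expectation Y (\<lambda>k. payoff2 v2 Y X - u1 v2 X k) = 0"
    using payoff2_eq[OF Y] integrable_u1[OF Y] by (simp add: integral_diff)
  have "AE k in measure_pmf Y. payoff2 v2 Y X - u1 v2 X k = 0"
    using z2 integrable_u1[OF Y] le2
    by (subst integral_nonneg_eq_0_iff_AE[symmetric]) auto
  thus "\<And>k. k \<in> set_pmf Y \<Longrightarrow> u1 v2 X k = payoff2 v2 Y X" by (simp add: AE_measure_pmf_iff)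
qed

lemma nash_of_pointwise:
  assumes X: "strategy X" and Y: "strategy Y"
    and le1: "\<And>k. u1 v1 Y k \<le> p1" and eq1: "\<And>k. k \<in> set_pmf X \<Longrightarrow> u1 v1 Y k = p1"
    and le2: "\<And>k. u1 v2 X k \<le> p2" and eq2: "\<And>k. k \<in> set_pmf Y \<Longrightarrow> u1 v2 X k = p2"
  shows "nash v1 v2 X Y" "payoff1 v1 X Y = p1" "payoff2 v2 Y X = p2"
proof -
  show "payoff1 v1 X Y = p1" using best_response(1)[OF X le1 eq1] payoff1_eq[OF X] by simp
  show "payoff2 v2 Y X = p2" using best_response(1)[OF Y le2 eq2] payoff2_eq[OF Y] by simp
  show "nash v1 v2 X Y" unfolding nash_def
    using X Y best_response[OF X le1 eq1] best_response[OF Y le2 eq2] payoff1_eq payoff2_eq by auto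
qed


locale sys0 =
  fixes r s :: "nat \<Rightarrow> real" and p1 p2 :: real and N :: nat
  assumes r_nn: "\<And>k. 0 \<le> r k" and s_nn: "\<And>k. 0 \<le> s k"
  and rfin: "\<And>k. N \<le> k \<Longrightarrow> r k = 0" and sfin: "\<And>k. N \<le> k \<Longrightarrow> s k = 0"
  and Dle0: "\<And>k. 2*(\<Sum>i<k. r i) + r k - real k - p2 \<le> 0"
  and Deq0: "\<And>k. 0 < s k \<Longrightarrow> 2*(\<Sum>i<k. r i) + r k - real k - p2 = 0"
  and Ele0: "\<And>k. 2*(\<Sum>i<k. s i) + s k - real k - p1 \<le> 0"
  and Eeq0: "\<And>k. 0 < r k \<Longrightarrow> 2*(\<Sum>i<k. s i) + s k - real k - p1 = 0"
begin

definition D where "D k = 2*(\<Sum>i<k. r i) + r k - real k - p2"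
definition E where "E k = 2*(\<Sum>i<k. s i) + s k - real k - p1"

lemma Dle: "D k \<le> 0" using Dle0 unfolding D_def by blast
lemma Ele: "E k \<le> 0" using Ele0 unfolding E_def by blast
lemma Deq: "0 < s k \<Longrightarrow> D k = 0" using Deq0 unfolding D_def by blast
lemma Eeq: "0 < r k \<Longrightarrow> E k = 0" using Eeq0 unfolding E_def by blast
lemma D_Suc: "D (Suc k) = D k + r k + r (Suc k) - 1" unfolding D_def by simp
lemma E_Suc: "E (Suc k) = E k + s k + s (Suc k) - 1" unfolding E_def by simp
lemma D_0: "D 0 = r 0 - p2" unfolding D_def by simp
lemma E_0: "E 0 = s 0 - p1" unfolding E_def by simp

lemma p2_ge: "r 0 \<le> p2" using Dle[of 0] D_0 by simp
lemma p1_ge: "s 0 \<le> p1" using Ele[of 0] E_0 by simp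
lemma p2_nn: "0 \<le> p2" using p2_ge r_nn[of 0] by simp
lemma p1_nn: "0 \<le> p1" using p1_ge s_nn[of 0] by simp

lemma sum_sq_id: "(\<Sum>k<n. s k * (2*(\<Sum>i<k. s i) + s k)) = (\<Sum>k<n. s k)^2"
  by (induction n) (simp_all add: power2_eq_square algebra_simps)

lemma sum_bil_id: "(\<Sum>k<n. r k * (2*(\<Sum>i<k. s i) + s k) + s k * (2*(\<Sum>i<k. r i) + r k))
   = 2 * (\<Sum>k<n. r k) * (\<Sum>k<n. s k)"
  by (induction n) (simp_all add: algebra_simps)

lemma sumN_r: "N \<le> n \<Longrightarrow> (\<Sum>k<n. f k * r k) = (\<Sum>k<N. f k * r k)"
proof -
  assume "N \<le> n"
  have "(\<Sum>k<n. f k * r k) = (\<Sum>k<N. f k * r k) + (\<Sum>k\<in>{N..<n}. f k * r k)"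
    using \<open>N \<le> n\<close> by (metis atLeast0LessThan sum.atLeastLessThan_concat zero_le)
  also have "(\<Sum>k\<in>{N..<n}. f k * r k) = 0" using rfin by simp
  finally show ?thesis by simp
qed

lemma sumN_s: "N \<le> n \<Longrightarrow> (\<Sum>k<n. f k * s k) = (\<Sum>k<N. f k * s k)"
proof -
  assume "N \<le> n"
  have "(\<Sum>k<n. f k * s k) = (\<Sum>k<N. f k * s k) + (\<Sum>k\<in>{N..<n}. f k * s k)"
    using \<open>N \<le> n\<close> by (metis atLeast0LessThan sum.atLeastLessThan_concat zero_le)
  also have "(\<Sum>k\<in>{N..<n}. f k * s k) = 0" using sfin by simp
  finally show ?thesis by simp
qed

lemma I1: "(\<Sum>k<N. real k * r k) + (\<Sum>k<N. real k * s k) + p1 * (\<Sum>k<N. r k) + p2 * (\<Sum>k<N. s k)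
   = 2 * (\<Sum>k<N. r k) * (\<Sum>k<N. s k)"
proof -
  have a: "r k * E k = 0" for k using Eeq[of k] r_nn[of k] by (cases "r k > 0") auto
  have b: "s k * D k = 0" for k using Deq[of k] s_nn[of k] by (cases "s k > 0") auto
  have "(\<Sum>k<N. r k * E k) = 0" by (simp only: a sum.neutral_const)
  hence A: "(\<Sum>k<N. r k * (2*(\<Sum>i<k. s i) + s k)) = (\<Sum>k<N. real k * r k) + p1 * (\<Sum>k<N. r k)"
    unfolding E_def by (simp add: algebra_simps sum.distrib sum_subtractf sum_distrib_left)
  have "(\<Sum>k<N. s k * D k) = 0" by (simp only: b sum.neutral_const)
  hence B: "(\<Sum>k<N. s k * (2*(\<Sum>i<k. r i) + r k)) = (\<Sum>k<N. real k * s k) + p2 * (\<Sum>k<N. s k)"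
    unfolding D_def by (simp add: algebra_simps sum.distrib sum_subtractf sum_distrib_left)
  show ?thesis using sum_bil_id[of N] A B by (simp add: sum.distrib)
qed

lemma I3: "(\<Sum>k<N. s k)^2 \<le> (\<Sum>k<N. real k * s k) + p1 * (\<Sum>k<N. s k)"
proof -
  have "s k * E k \<le> 0" for k using Ele[of k] s_nn[of k] by (simp add: mult_nonneg_nonpos)
  hence "(\<Sum>k<N. s k * E k) \<le> 0" by (simp add: sum_nonpos)
  hence "(\<Sum>k<N. s k * (2*(\<Sum>i<k. s i) + s k)) \<le> (\<Sum>k<N. real k * s k) + p1 * (\<Sum>k<N. s k)"
    unfolding E_def by (simp add: algebra_simps sum.distrib sum_subtractf sum_distrib_left)
  thus ?thesis using sum_sq_id[of N] by simp
qed

lemma p1_pos: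
  fixes x y b \<alpha> :: real and m :: nat
  assumes xdef: "x = (\<Sum>k<N. r k)" and ydef: "y = (\<Sum>k<N. s k)" and x0: "0 < x" and xy: "x \<le> y"
    and mx: "(\<Sum>k<N. real k * r k) = x * (real m + \<alpha>)" and al: "0 < \<alpha>"
    and my: "(\<Sum>k<N. real k * s k) = y * b" and bm: "b < real m"
  shows "0 < p1"
proof (rule ccontr)
  assume "\<not> 0 < p1"
  hence p10: "p1 = 0" using p1_nn by simp
  have y0: "0 < y" using x0 xy by simp
  have "y * y \<le> y * b" using I3 p10 ydef my by (simp add: power2_eq_square)
  hence yb: "y \<le> b" using y0 by simp
  have "0 \<le> p2 * y" using p2_nn y0 by simp
  hence A: "x * (real m + \<alpha>) + y * b \<le> 2 * x * y" using I1 xdef ydef mx my p10 by simp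
  have "y < real m + \<alpha>" using yb bm al by simp
  hence B: "x * y < x * (real m + \<alpha>)" using x0 by simp
  have C: "y * y \<le> y * b" using yb y0 by simp
  have "y * y < x * y" using A B C by linarith
  thus False using xy y0 by (simp add: mult_strict_right_mono_neg not_less mult_right_mono)
qed

lemma s0_pos_of:
  assumes "0 < p1" and "\<exists>k. 0 < s k"
  shows "0 < s 0"
proof (rule ccontr)
  assume "\<not> 0 < s 0"
  define t where "t = (LEAST k. 0 < s k)"
  have st: "0 < s t" unfolding t_def using assms(2) by (metis LeastI)
  have below: "k < t \<Longrightarrow> s k = 0" for k
    using not_less_Least[of k "\<lambda>k. 0 < s k"] s_nn[of k] unfolding t_def by linarith
  have t1: "t \<ge> 1" using st \<open>\<not> 0 < s 0\<close> by (cases t) auto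
  have ss: "(\<Sum>i<t. s i) = 0" using below by simp
  have rb: "k < t \<Longrightarrow> r k = 0" for k
  proof (rule ccontr)
    assume "k < t" "r k \<noteq> 0"
    hence "0 < r k" using r_nn[of k] by simp
    hence "E k = 0" by (rule Eeq)
    moreover have "(\<Sum>i<k. s i) = 0" using below \<open>k<t\<close> by simp
    ultimately show False using below[OF \<open>k<t\<close>] assms(1) unfolding E_def by simp
  qed
  have "D t = 0" using st by (rule Deq)
  hence "r t = real t + p2" using rb unfolding D_def by simp
  hence "0 < r t" using t1 p2_nn by simp
  hence "E t = 0" by (rule Eeq)
  hence et: "s t = real t + p1" using ss unfolding E_def by simp
  have "E (Suc t) \<le> 0" by (rule Ele)
  hence "s t + s (Suc t) \<le> 1" using E_Suc[of t] \<open>E t = 0\<close> by simp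
  thus False using et t1 assms(1) s_nn[of "Suc t"] by simp
qed

end

locale sys = sys0 +
  assumes s0: "0 < s 0"
begin

lemma D0: "D 0 = 0" using Deq s0 by blast
lemma p2_eq: "p2 = r 0" using D0 D_0 by simp

lemma r_le1: "r k \<le> 1"
proof (cases k)
  case 0
  have "D 1 \<le> 0" by (rule Dle)
  thus ?thesis using D_Suc[of 0] D0 r_nn[of 1] 0 by simp
next
  case (Suc j)
  show ?thesis
  proof (cases "0 < r k")
    case False thus ?thesis by simp
  next
    case True
    hence "E k = 0" by (rule Eeq)
    hence "s j + s k \<ge> 1" using E_Suc[of j] Ele[of j] Suc by simp
    hence "0 < s j \<or> 0 < s k" using s_nn[of j] s_nn[of k] by linarith
    thus ?thesis
    proof
      assume "0 < s j" hence "D j = 0" by (rule Deq)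
      thus ?thesis using D_Suc[of j] Dle[of k] Suc r_nn[of j] by simp
    next
      assume "0 < s k" hence "D k = 0" by (rule Deq)
      thus ?thesis using D_Suc[of k] Dle[of "Suc k"] r_nn[of "Suc k"] by simp
    qed
  qed
qed

lemma s_le1: "1 \<le> k \<Longrightarrow> s k \<le> 1"
proof -
  assume "1 \<le> k"
  then obtain j where Suc: "k = Suc j" by (cases k) auto
  show ?thesis
  proof (cases "0 < s k")
    case False thus ?thesis by simp
  next
    case True
    hence "D k = 0" by (rule Deq)
    hence "r j + r k \<ge> 1" using D_Suc[of j] Dle[of j] Suc by simp
    hence "0 < r j \<or> 0 < r k" using r_nn[of j] r_nn[of k] by linarith
    thus ?thesis
    proof
      assume "0 < r j" hence "E j = 0" by (rule Eeq)
      thus ?thesis using E_Suc[of j] Ele[of k] Suc s_nn[of j] by simp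
    next
      assume "0 < r k" hence "E k = 0" by (rule Eeq)
      thus ?thesis using E_Suc[of k] Ele[of "Suc k"] s_nn[of "Suc k"] by simp
    qed
  qed
qed

lemma s0_le1: "0 < r 0 \<Longrightarrow> s 0 \<le> 1"
  using Eeq[of 0] E_Suc[of 0] Ele[of 1] s_nn[of 1] by simp

lemma ygap: "0 < s (Suc (Suc j)) \<Longrightarrow> 0 < s (Suc j) \<or> 0 < s j"
proof (rule ccontr)
  assume a: "0 < s (Suc (Suc j))" and "\<not> (0 < s (Suc j) \<or> 0 < s j)"
  hence z: "s (Suc j) = 0" "s j = 0" using s_nn[of j] s_nn[of "Suc j"] by auto
  have r1: "r (Suc j) = 0"
  proof (rule ccontr)
    assume "r (Suc j) \<noteq> 0" hence "0 < r (Suc j)" using r_nn[of "Suc j"] by simp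
    hence "E (Suc j) = 0" by (rule Eeq)
    thus False using E_Suc[of j] Ele[of j] z by simp
  qed
  have "D (Suc (Suc j)) = 0" using a by (rule Deq)
  hence "r (Suc (Suc j)) \<ge> 1" using D_Suc[of "Suc j"] Dle[of "Suc j"] r1 by simp
  hence "E (Suc (Suc j)) = 0" by (intro Eeq) simp
  moreover have "s (Suc (Suc j)) \<le> 1" using s_le1[of "Suc (Suc j)"] by simp
  ultimately show False using E_Suc[of j] E_Suc[of "Suc j"] Ele[of j] z by simp
qed

lemma xgap: "0 < r (Suc (Suc j)) \<Longrightarrow> 0 < r (Suc j) \<or> 0 < r j"
proof (rule ccontr)
  assume a: "0 < r (Suc (Suc j))" and "\<not> (0 < r (Suc j) \<or> 0 < r j)"
  hence z: "r (Suc j) = 0" "r j = 0" using r_nn[of j] r_nn[of "Suc j"] by auto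
  have s1: "s (Suc j) = 0"
  proof (rule ccontr)
    assume "s (Suc j) \<noteq> 0" hence "0 < s (Suc j)" using s_nn[of "Suc j"] by simp
    hence "D (Suc j) = 0" by (rule Deq)
    thus False using D_Suc[of j] Dle[of j] z by simp
  qed
  have "E (Suc (Suc j)) = 0" using a by (rule Eeq)
  hence "s (Suc (Suc j)) \<ge> 1" using E_Suc[of "Suc j"] Ele[of "Suc j"] s1 by simp
  hence "D (Suc (Suc j)) = 0" by (intro Deq) simp
  moreover have "r (Suc (Suc j)) \<le> 1" using r_le1 by simp
  ultimately show False using D_Suc[of j] D_Suc[of "Suc j"] Dle[of j] z by simp
qed

lemma up_gapY: "0 < s j \<Longrightarrow> 0 < s l \<Longrightarrow> j < l \<Longrightarrow> 0 < s (Suc j) \<or> 0 < s (Suc (Suc j))"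
proof (induction l rule: less_induct)
  case (less l)
  show ?case
  proof (cases "l \<le> Suc (Suc j)")
    case True
    thus ?thesis using less.prems by (cases "l = Suc j") (auto simp: le_Suc_eq)
  next
    case False
    then obtain i where l: "l = Suc (Suc i)" and "j < i" by (cases l; cases "l - 1"; auto)
    from ygap[of i] less.prems l have "0 < s (Suc i) \<or> 0 < s i" by simp
    thus ?thesis
    proof
      assume "0 < s (Suc i)" thus ?thesis using less.IH[of "Suc i"] less.prems l \<open>j<i\<close> by simp
    next
      assume "0 < s i" thus ?thesis using less.IH[of "i"] less.prems l \<open>j<i\<close> by simp
    qed
  qed
qed

lemma up_gapX: "0 < r j \<Longrightarrow> 0 < r l \<Longrightarrow> j < l \<Longrightarrow> 0 < r (Suc j) \<or> 0 < r (Suc (Suc j))"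
proof (induction l rule: less_induct)
  case (less l)
  show ?case
  proof (cases "l \<le> Suc (Suc j)")
    case True
    thus ?thesis using less.prems by (cases "l = Suc j") (auto simp: le_Suc_eq)
  next
    case False
    then obtain i where l: "l = Suc (Suc i)" and "j < i" by (cases l; cases "l - 1"; auto)
    from xgap[of i] less.prems l have "0 < r (Suc i) \<or> 0 < r i" by simp
    thus ?thesis
    proof
      assume "0 < r (Suc i)" thus ?thesis using less.IH[of "Suc i"] less.prems l \<open>j<i\<close> by simp
    next
      assume "0 < r i" thus ?thesis using less.IH[of "i"] less.prems l \<open>j<i\<close> by simp
    qed
  qed
qed


lemma BB_down:
  assumes "0 < r (Suc j)" "0 < s (Suc j)" "0 < r (Suc (Suc j))" "0 < s (Suc (Suc j))"
  shows "0 < r j \<and> 0 < s j"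
proof -
  have "D (Suc j) = 0" "D (Suc (Suc j)) = 0" using assms Deq by auto
  moreover have "E (Suc j) = 0" "E (Suc (Suc j)) = 0" using assms Eeq by auto
  ultimately show ?thesis using D_Suc[of j] D_Suc[of "Suc j"] E_Suc[of j] E_Suc[of "Suc j"]
      Dle[of j] Ele[of j] assms by simp
qed

lemma BB0: "0 < r j \<Longrightarrow> 0 < s j \<Longrightarrow> 0 < r (Suc j) \<Longrightarrow> 0 < s (Suc j) \<Longrightarrow> 0 < r 0 \<and> 0 < r 1 \<and> 0 < s 1"
proof (induction j)
  case 0 thus ?case by simp
next
  case (Suc j)
  from BB_down[of j] Suc.prems have "0 < r j \<and> 0 < s j" by simp
  thus ?case using Suc by simp
qed

lemma Qchain: "0 < s k \<Longrightarrow> r k = 0 \<Longrightarrow> r (Suc k) = 1 \<Longrightarrow>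
    \<forall>i \<le> Suc k. r i = (if even (i + k) then 0 else 1)"
proof (induction k rule: less_induct)
  case (less k)
  show ?case
  proof (cases k)
    case 0 thus ?thesis using less.prems by (auto simp: le_Suc_eq)
  next
    case (Suc k1)
    show ?thesis
    proof (cases k1)
      case 0
      have "D 1 = 0" using less.prems Suc 0 Deq by simp
      hence "r 0 = 1" using D_Suc[of 0] D0 less.prems Suc 0 by simp
      thus ?thesis using less.prems Suc 0 by (auto simp: le_Suc_eq)
    next
      case (Suc k2)
      have k: "k = Suc (Suc k2)" using \<open>k = Suc k1\<close> Suc by simp
      have Dk: "D k = 0" using less.prems Deq by simp
      have key: "r (Suc k2) = 1 \<and> r k2 = 0 \<and> 0 < s k2"
      proof -
        from ygap[of k2] less.prems k have "0 < s (Suc k2) \<or> 0 < s k2" by simp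
        thus ?thesis
        proof
          assume a: "0 < s (Suc k2)"
          hence "D (Suc k2) = 0" by (rule Deq)
          hence r1: "r (Suc k2) = 1" using D_Suc[of "Suc k2"] Dk k less.prems by simp
          have sk2: "0 < s k2"
          proof (rule ccontr)
            assume "\<not> 0 < s k2" hence "s k2 = 0" using s_nn[of k2] by simp
            moreover have "E (Suc k2) = 0" using r1 Eeq by simp
            ultimately show False using E_Suc[of k2] E_Suc[of "Suc k2"] Ele[of k2] Ele[of k] k less.prems
              by simp
          qed
          hence "D k2 = 0" by (rule Deq)
          thus ?thesis using D_Suc[of k2] \<open>D (Suc k2) = 0\<close> r1 sk2 by simp
        next
          assume a: "0 < s k2"
          hence "D k2 = 0" by (rule Deq)
          hence "r k2 + 2 * r (Suc k2) = 2" "r k2 + r (Suc k2) \<le> 1"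
            using D_Suc[of k2] D_Suc[of "Suc k2"] Dk k less.prems Dle[of "Suc k2"] by auto
          moreover have "r (Suc k2) \<le> 1" by (rule r_le1)
          ultimately show ?thesis using a r_nn[of k2] by simp
        qed
      qed
      have IH: "\<forall>i \<le> Suc k2. r i = (if even (i + k2) then 0 else 1)"
        using less.IH[of k2] key k by simp
      show ?thesis
      proof (intro allI impI)
        fix i assume "i \<le> Suc k"
        hence "i \<le> Suc k2 \<or> i = k \<or> i = Suc k" using k by auto
        thus "r i = (if even (i + k) then 0 else 1)"
          using IH less.prems k by auto
      qed
    qed
  qed
qed

definition pat :: "nat \<Rightarrow> nat \<Rightarrow> real" where
  "pat c i = (if even (i + c) then 1 else 0)"

lemma pat_Suc: "pat c (Suc i) = 1 - pat c i" unfolding pat_def by simp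

lemma pat_D: "\<forall>i \<le> K. r i = pat c i \<Longrightarrow> i \<le> K \<Longrightarrow> D i = 0"
proof (induction i)
  case 0 thus ?case using D0 by simp
next
  case (Suc i)
  thus ?case using D_Suc[of i] pat_Suc[of c i] by simp
qed

lemma schain:
  assumes pt: "\<forall>i \<le> K. r i = pat c i" and pK: "pat c (Suc K) = 1"
    and rp: "0 < r (Suc K)" "r (Suc K) < 1"
    and j: "j \<le> K" "even (j + c)"
  shows "s j = 0"
proof -
  define p where "p = Suc K"
  have pK0: "pat c K = 0" using pK pat_Suc[of c K] by simp
  have DK: "D K = 0" using pat_D[OF pt] by simp
  have Dp: "D p < 0" using D_Suc[of K] DK pt pK0 rp unfolding p_def by simp
  have sp: "s p = 0"
  proof (rule ccontr)
    assume "s p \<noteq> 0" hence "0 < s p" using s_nn[of p] by simp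
    hence "D p = 0" by (rule Deq) thus False using Dp by simp
  qed
  have Ep: "E p = 0" using rp Eeq unfolding p_def by simp
  have sK: "1 \<le> s K" using E_Suc[of K] Ep Ele[of K] sp unfolding p_def by simp
  have evp: "even (p + c)" using pK unfolding pat_def p_def by (simp split: if_splits)
  have claim: "\<forall>q. p = q + 2 * Suc t \<longrightarrow> s q = 0 \<and> 1 \<le> s (Suc q)" for t
  proof (induction t)
    case 0
    show ?case
    proof (intro allI impI)
      fix q assume pq: "p = q + 2 * Suc 0"
      hence "Suc q = K" unfolding p_def by simp
      hence s1: "1 \<le> s (Suc q)" using sK by simp
      have "r q = 1" using pt \<open>Suc q = K\<close> evp pq unfolding pat_def by auto
      hence "E q = 0" using Eeq by simp
      hence "s q + 2 * s (Suc q) + s p = 2"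
        using E_Suc[of q] E_Suc[of "Suc q"] Ep pq by (simp add: numeral_2_eq_2)
      thus "s q = 0 \<and> 1 \<le> s (Suc q)" using s1 sp s_nn[of q] by simp
    qed
  next
    case (Suc t)
    show ?case
    proof (intro allI impI)
      fix q assume pq: "p = q + 2 * Suc (Suc t)"
      have "s (Suc (Suc q)) = 0 \<and> 1 \<le> s (Suc (Suc (Suc q)))"
        using Suc.IH pq by (simp add: algebra_simps)
      moreover have "r (Suc (Suc q)) = 1" "r q = 1"
        using pt pq evp unfolding pat_def p_def by auto
      ultimately have A: "s (Suc (Suc q)) = 0" "E (Suc (Suc q)) = 0" "E q = 0"
        using Eeq by auto
      have s1: "1 \<le> s (Suc q)" using E_Suc[of "Suc q"] A Ele[of "Suc q"] by simp
      have "s q + 2 * s (Suc q) + s (Suc (Suc q)) = 2"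
        using E_Suc[of q] E_Suc[of "Suc q"] A by simp
      thus "s q = 0 \<and> 1 \<le> s (Suc q)" using s1 A s_nn[of q] by simp
    qed
  qed
  have "j < p" using j unfolding p_def by simp
  moreover have ev: "even (p - j)" using j evp \<open>j < p\<close> by (simp add: even_diff_nat)
  obtain u where u: "p - j = 2 * u" using ev by (blast elim: evenE)
  hence "u \<ge> 1" using \<open>j < p\<close> by (cases u) auto
  then obtain t where "u = Suc t" by (cases u) auto
  hence "p = j + 2 * Suc t" using u \<open>j < p\<close> by simp
  thus ?thesis using claim[of t] by simp
qed

lemma zeros_after:
  assumes "r K = 0" "r (Suc K) = 0"
  shows "\<forall>i>K. r i = 0"
proof -
  have "K < i \<Longrightarrow> r i = 0" for i
  proof (induction i rule: less_induct)
    case (less i)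
    show ?case
    proof (cases "i = Suc K")
      case True thus ?thesis using assms by simp
    next
      case False
      define i0 where "i0 = i - 2"
      have i: "i = Suc (Suc i0)" "K \<le> i0" using less.prems False unfolding i0_def by auto
      show ?thesis
      proof (rule ccontr)
        assume "r i \<noteq> 0" hence "0 < r i" using r_nn[of i] by simp
        hence "0 < r (Suc i0) \<or> 0 < r i0" using xgap i by simp
        moreover have "r (Suc i0) = 0" using less.IH[of "Suc i0"] i by simp
        moreover have "r i0 = 0"
          using less.IH[of i0] i assms by (cases "i0 = K") auto
        ultimately show False by simp
      qed
    qed
  qed
  thus ?thesis by blast
qed

lemma upward:
  assumes pt: "\<forall>i \<le> P. r i = pat c i"
    and j: "j \<le> P" "even (j + c)" "0 < s j"
  shows "\<exists>L. (\<forall>i<L. r i + r (Suc i) = 1) \<and> (\<forall>i>L. r i = 0)"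
proof (rule ccontr)
  assume nL: "\<not> ?thesis"
  have "\<forall>i \<le> K. r i = pat c i" if "P \<le> K" for K
    using that
  proof (induction K rule: dec_induct)
    case base thus ?case using pt by simp
  next
    case (step K)
    have DK: "D K = 0" using pat_D[OF step.IH] by simp
    have rsk: "r (Suc K) = pat c (Suc K)"
    proof (cases "pat c (Suc K) = 0")
      case True
      hence "pat c K = 1" using pat_Suc[of c K] by simp
      hence "r K = 1" using step.IH by simp
      moreover have "D (Suc K) \<le> 0" by (rule Dle)
      ultimately have "r (Suc K) \<le> 0" using D_Suc[of K] DK by simp
      thus ?thesis using True r_nn[of "Suc K"] by simp
    next
      case False
      hence p1: "pat c (Suc K) = 1" unfolding pat_def by (simp split: if_splits)
      hence "pat c K = 0" using pat_Suc[of c K] by simp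
      hence rK: "r K = 0" using step.IH by simp
      have "r (Suc K) \<le> 1" by (rule r_le1)
      moreover have "r (Suc K) \<noteq> 0"
      proof
        assume "r (Suc K) = 0"
        hence "\<forall>i>K. r i = 0" using zeros_after[OF rK] by blast
        moreover have "\<forall>i<K. r i + r (Suc i) = 1"
          using step.IH pat_Suc by simp
        ultimately show False using nL by blast
      qed
      moreover have "\<not> (0 < r (Suc K) \<and> r (Suc K) < 1)"
      proof
        assume "0 < r (Suc K) \<and> r (Suc K) < 1"
        hence "s j = 0" using schain[OF step.IH p1] j step.hyps by auto
        thus False using j by simp
      qed
      ultimately show ?thesis unfolding p1 using r_nn[of "Suc K"] by linarith
    qed
    show ?case using step.IH rsk by (auto simp: le_Suc_eq)
  qed
  hence A: "\<forall>i \<le> P + Suc N. r i = pat c i" by (metis le_add1)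
  hence "r N = pat c N" "r (Suc N) = pat c (Suc N)" by auto
  moreover have "r N = 0" "r (Suc N) = 0" using rfin by auto
  ultimately show False using pat_Suc[of c N] by simp
qed


lemma evens:
  assumes nc: "\<And>k. \<not> (0 < s k \<and> 0 < s (Suc k))"
  shows "\<exists>n. \<forall>k. 0 < s k \<longleftrightarrow> (even k \<and> k \<le> 2*n)"
proof -
  let ?A = "{k. 0 < s k}"
  have sub: "?A \<subseteq> {..<N}"
  proof
    fix k assume "k \<in> ?A" hence "0 < s k" by simp
    thus "k \<in> {..<N}" using sfin[of k] by (cases "N \<le> k") auto
  qed
  have fin: "finite ?A" using finite_subset[OF sub] by simp
  have A0: "0 \<in> ?A" using s0 by simp
  define d where "d = Max ?A"
  have sd: "0 < s d" using Max_in[OF fin] A0 unfolding d_def by auto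
  have dmax: "0 < s k \<Longrightarrow> k \<le> d" for k using Max_ge[OF fin] unfolding d_def by simp
  have main: "k \<le> d \<Longrightarrow> (0 < s k \<longleftrightarrow> even k)" for k
  proof (induction k rule: less_induct)
    case (less k)
    show ?case
    proof (cases "k \<le> 1")
      case True
      hence "k = 0 \<or> k = 1" by auto
      thus ?thesis using s0 nc[of 0] by auto
    next
      case False
      define i where "i = k - 2"
      have k: "k = Suc (Suc i)" using False unfolding i_def by simp
      have IHi: "0 < s i \<longleftrightarrow> even i" using less.IH[of i] less.prems k by simp
      have IHi1: "0 < s (Suc i) \<longleftrightarrow> even (Suc i)" using less.IH[of "Suc i"] less.prems k by simp
      show ?thesis
      proof (cases "even k")
        case True
        hence "0 < s i" "\<not> 0 < s (Suc i)" using IHi IHi1 k by auto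
        moreover have "i < d" using less.prems k by simp
        ultimately have "0 < s k" using up_gapY[of i d] sd k by auto
        thus ?thesis using True by simp
      next
        case False
        hence "0 < s (Suc i)" using IHi1 k by simp
        hence "\<not> 0 < s k" using nc[of "Suc i"] k by simp
        thus ?thesis using False by simp
      qed
    qed
  qed
  have "even d" using main[of d] sd by simp
  then obtain n where dn: "d = 2*n" by (auto elim: evenE)
  show ?thesis
  proof (intro exI allI)
    fix k show "0 < s k \<longleftrightarrow> (even k \<and> k \<le> 2*n)"
      using main[of k] dmax[of k] dn by (cases "k \<le> d") auto
  qed
qed

lemma brun:
  assumes "0 < r 0" "0 < r 1" "0 < s 1"
  shows "\<exists>L\<ge>1. (\<forall>i<L. r i + r (Suc i) = 1 \<and> s i + s (Suc i) = 1) \<and> (\<forall>i>L. r i = 0 \<and> s i = 0)"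
proof -
  let ?A = "{L. \<forall>i\<le>L. 0 < r i \<and> 0 < s i}"
  have sub: "?A \<subseteq> {..<N}"
  proof
    fix L assume "L \<in> ?A" hence "0 < r L" by simp
    thus "L \<in> {..<N}" using rfin[of L] by (cases "N \<le> L") auto
  qed
  have fin: "finite ?A" using finite_subset[OF sub] by simp
  have A1: "1 \<in> ?A"
  proof (intro CollectI allI impI)
    fix i :: nat assume "i \<le> 1" hence "i = 0 \<or> i = 1" by auto
    thus "0 < r i \<and> 0 < s i" using assms s0 by auto
  qed
  define L where "L = Max ?A"
  have "?A \<noteq> {}" using A1 by blast
  hence LA0: "L \<in> ?A" using Max_in[OF fin] unfolding L_def by blast
  hence LA: "\<And>i. i \<le> L \<Longrightarrow> 0 < r i \<and> 0 < s i" by blast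
  have L1: "1 \<le> L" using Max_ge[OF fin A1] unfolding L_def by simp
  have nSL: "\<not> (0 < r (Suc L) \<and> 0 < s (Suc L))"
  proof
    assume a: "0 < r (Suc L) \<and> 0 < s (Suc L)"
    have "Suc L \<in> ?A"
    proof (intro CollectI allI impI)
      fix i assume "i \<le> Suc L" hence "i \<le> L \<or> i = Suc L" by (simp add: le_Suc_eq)
      thus "0 < r i \<and> 0 < s i" using LA[of i] a by auto
    qed
    hence "Suc L \<le> L" using Max_ge[OF fin] unfolding L_def by blast
    thus False by simp
  qed
  have pairs: "i < L \<Longrightarrow> r i + r (Suc i) = 1 \<and> s i + s (Suc i) = 1" for i
  proof -
    assume "i < L"
    hence "0 < r i" "0 < s i" "0 < r (Suc i)" "0 < s (Suc i)" using LA[of i] LA[of "Suc i"] by auto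
    hence "D i = 0" "D (Suc i) = 0" "E i = 0" "E (Suc i) = 0" using Deq Eeq by auto
    thus ?thesis using D_Suc[of i] E_Suc[of i] by simp
  qed
  obtain L0 where L0: "L = Suc L0" using L1 by (cases L) auto
  have pL0: "r L0 + r L = 1" "s L0 + s L = 1" using pairs[of L0] L0 by auto
  have posL: "0 < r L0" "0 < s L0" "0 < r L" "0 < s L" using LA[of L0] LA[of L] L0 by auto
  have DL: "D L = 0" "E L = 0" using posL Deq Eeq by auto
  have rSL: "r (Suc L) = 0"
  proof (rule ccontr)
    assume "r (Suc L) \<noteq> 0" hence a: "0 < r (Suc L)" using r_nn[of "Suc L"] by simp
    hence "s (Suc L) = 0" using nSL s_nn[of "Suc L"] by simp
    moreover have "E (Suc L) = 0" using a Eeq by simp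
    ultimately have "s L = 1" using E_Suc[of L] DL by simp
    thus False using pL0 posL by simp
  qed
  have sSL: "s (Suc L) = 0"
  proof (rule ccontr)
    assume "s (Suc L) \<noteq> 0" hence a: "0 < s (Suc L)" using s_nn[of "Suc L"] by simp
    moreover have "D (Suc L) = 0" using a Deq by simp
    ultimately have "r L = 1" using D_Suc[of L] DL rSL by simp
    thus False using pL0 posL by simp
  qed
  have beyond: "L < i \<Longrightarrow> r i = 0 \<and> s i = 0" for i
  proof -
    assume Li: "L < i"
    show ?thesis
    proof (cases "i = Suc L")
      case True thus ?thesis using rSL sSL by simp
    next
      case False
      hence Li2: "Suc L < i" using Li by simp
      have "s i = 0"
      proof (rule ccontr)
        assume "s i \<noteq> 0" hence "0 < s i" using s_nn[of i] by simp
        hence "0 < s (Suc L) \<or> 0 < s (Suc (Suc L))" using up_gapY[of L i] posL(4) Li by blast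
        hence "0 < s (Suc (Suc L))" using sSL by simp
        hence "D (Suc (Suc L)) = 0" by (rule Deq)
        hence "r L + r (Suc (Suc L)) = 2" using D_Suc[of L] D_Suc[of "Suc L"] DL rSL by simp
        hence "r L = 1" using r_le1[of L] r_le1[of "Suc (Suc L)"] by simp
        thus False using pL0 posL by simp
      qed
      moreover have "r i = 0"
      proof (rule ccontr)
        assume "r i \<noteq> 0" hence "0 < r i" using r_nn[of i] by simp
        hence "0 < r (Suc L) \<or> 0 < r (Suc (Suc L))" using up_gapX[of L i] posL(3) Li by blast
        hence "0 < r (Suc (Suc L))" using rSL by simp
        hence "E (Suc (Suc L)) = 0" by (rule Eeq)
        hence "s L + s (Suc (Suc L)) = 2" using E_Suc[of L] E_Suc[of "Suc L"] DL sSL by simp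
        hence "s L = 1" using s_le1[of L] s_le1[of "Suc (Suc L)"] L1 by simp
        thus False using pL0 posL by simp
      qed
      ultimately show ?thesis by simp
    qed
  qed
  show ?thesis using L1 pairs beyond by blast
qed

end

lemma alt_form: "\<forall>i<L. f i + f (Suc i) = (1::real) \<Longrightarrow> i \<le> L \<Longrightarrow> f i = (if even i then f 0 else 1 - f 0)"
proof (induction i)
  case 0 thus ?case by simp
next
  case (Suc i)
  have A: "f i + f (Suc i) = 1" using Suc.prems by simp
  have B: "f i = (if even i then f 0 else 1 - f 0)" using Suc.prems Suc.IH by simp
  have "f (Suc i) = 1 - f i" using A by linarith
  thus ?case using B by (cases "even i") simp_all
qed

lemma alt_sum_even:
  "(\<Sum>k<2*n. (if even k then a else 1 - a)) = real n \<and>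
   (\<Sum>k<2*n. real k * (if even k then a else 1 - a)) = real n ^ 2 - real n * a"
proof (induction n)
  case 0 thus ?case by simp
next
  case (Suc n)
  have e: "2 * Suc n = Suc (Suc (2*n))" by simp
  show ?case using Suc unfolding e by (simp add: power2_eq_square algebra_simps)
qed

lemma sum_supp_eq:
  fixes f :: "nat \<Rightarrow> real"
  assumes "\<And>k. M \<le> k \<Longrightarrow> f k = 0" "\<And>k. N \<le> k \<Longrightarrow> f k = 0"
  shows "(\<Sum>k<M. f k) = (\<Sum>k<N. f k)"
proof -
  have a: "(\<Sum>k<max M N. f k) = (\<Sum>k<M. f k)"
  proof -
    have "(\<Sum>k<max M N. f k) = (\<Sum>k<M. f k) + (\<Sum>k\<in>{M..<max M N}. f k)"
      by (metis atLeast0LessThan max.cobounded1 sum.atLeastLessThan_concat zero_le)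
    thus ?thesis using assms(1) by simp
  qed
  have b: "(\<Sum>k<max M N. f k) = (\<Sum>k<N. f k)"
  proof -
    have "(\<Sum>k<max M N. f k) = (\<Sum>k<N. f k) + (\<Sum>k\<in>{N..<max M N}. f k)"
      by (metis atLeast0LessThan max.cobounded2 sum.atLeastLessThan_concat zero_le)
    thus ?thesis using assms(2) by simp
  qed
  show ?thesis using a b by simp
qed

lemma alt_sums:
  fixes f :: "nat \<Rightarrow> real"
  assumes alt: "\<forall>i<L. f i + f (Suc i) = 1" and z: "\<forall>i>L. f i = 0" and NL: "\<And>k. N \<le> k \<Longrightarrow> f k = 0"
  shows "(\<exists>n. L = 2*n \<and> (\<Sum>k<N. f k) = real n + f 0 \<and> (\<Sum>k<N. real k * f k) = real n * (real n + f 0))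
       \<or> (\<exists>n. Suc L = 2*n \<and> (\<Sum>k<N. f k) = real n \<and> (\<Sum>k<N. real k * f k) = real n ^ 2 - real n * f 0)"
proof -
  define g where "g k = (if even k then f 0 else 1 - f 0)" for k :: nat
  have fg: "k \<le> L \<Longrightarrow> f k = g k" for k using alt_form[OF alt] unfolding g_def by simp
  have s1: "(\<Sum>k<N. f k) = (\<Sum>k<Suc L. g k)"
    using sum_supp_eq[of "Suc L" f N] z NL fg by (simp add: Suc_le_eq)
  have s2: "(\<Sum>k<N. real k * f k) = (\<Sum>k<Suc L. real k * g k)"
  proof -
    have "(\<Sum>k<N. real k * f k) = (\<Sum>k<Suc L. real k * f k)"
      using sum_supp_eq[of "Suc L" "\<lambda>k. real k * f k" N] z NL by (simp add: Suc_le_eq)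
    also have "\<dots> = (\<Sum>k<Suc L. real k * g k)" using fg by (intro sum.cong) auto
    finally show ?thesis .
  qed
  show ?thesis
  proof (cases "even L")
    case True
    then obtain n where n: "L = 2*n" by (auto elim: evenE)
    have "(\<Sum>k<Suc L. g k) = real n + f 0" "(\<Sum>k<Suc L. real k * g k) = real n * (real n + f 0)"
      using alt_sum_even[where n=n and a="f 0"] n unfolding g_def by (simp_all add: power2_eq_square algebra_simps)
    thus ?thesis using s1 s2 n by auto
  next
    case False
    then obtain n where n: "Suc L = 2*n" by (metis even_Suc evenE)
    have "(\<Sum>k<Suc L. g k) = real n" "(\<Sum>k<Suc L. real k * g k) = real n ^ 2 - real n * f 0"
      using alt_sum_even[where n=n and a="f 0"] n unfolding g_def by simp_all
    thus ?thesis using s1 s2 n by auto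
  qed
qed

lemma not_int_between: "real m < real z \<Longrightarrow> real z < real m + 1 \<Longrightarrow> False"
proof -
  assume a: "real m < real z" "real z < real m + 1"
  hence "m < z" by simp
  hence "Suc m \<le> z" by simp
  hence "real (Suc m) \<le> real z" by (simp only: of_nat_le_iff)
  thus False using a by simp
qed


context sys
begin

lemma sum_lt_le_x: "(\<Sum>i<K. r i) \<le> (\<Sum>i<N. r i)"
proof -
  have "(\<Sum>i<K. r i) \<le> (\<Sum>i<max K N. r i)"
    by (intro sum_mono2) (auto simp: r_nn)
  also have "\<dots> = (\<Sum>i<N. r i)" using sum_supp_eq[of "max K N" r N] rfin by simp
  finally show ?thesis .
qed

lemma final:
  fixes x y b \<alpha> :: real and m :: nat
  assumes xdef: "x = (\<Sum>k<N. r k)" and ydef: "y = (\<Sum>k<N. s k)"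
    and x0: "0 < x"
    and mx: "(\<Sum>k<N. real k * r k) = x * (real m + \<alpha>)"
    and al: "0 < \<alpha>" "\<alpha> < 1" and m1: "1 \<le> m"
    and my: "(\<Sum>k<N. real k * s k) = y * b" and b: "0 < b" "b < real m"
  shows "r 0 = 0 \<and> s 0 = y - m \<and> (\<forall>k. 0 < k \<longrightarrow> s k = (if even k \<and> k \<le> 2*m then 1 else 0))
     \<and> real m < x \<and> x < real m + 1 \<and> p2 = 0 \<and> p1 = 2*y - 2*m - 1
     \<and> (\<forall>k. 2*m + 1 < k \<longrightarrow> r k = 0) \<and> y * b = m*(m+1) \<and> x * \<alpha> = (m+1)*(x - m)"
proof -
  have N0: "0 < N" using s0 sfin[of 0] by (cases N) auto
  have y0: "s 0 \<le> y" unfolding ydef using N0 by (intro member_le_sum) (auto simp: s_nn)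
  hence ypos: "0 < y" using s0 by simp
  have intc: "False" if "real m + \<alpha> = real z" for z :: nat
  proof -
    have "real m < real z" "real z < real m + 1" using al that by linarith+
    thus False by (rule not_int_between)
  qed
  have alt_contra: False if A: "\<forall>i<L. r i + r (Suc i) = 1" "\<forall>i>L. r i = 0" and r01: "r 0 = 0 \<or> r 0 = 1" for L
  proof -
    have H: "(\<exists>n. L = 2*n \<and> (\<Sum>k<N. r k) = real n + r 0 \<and> (\<Sum>k<N. real k * r k) = real n * (real n + r 0))
       \<or> (\<exists>n. Suc L = 2*n \<and> (\<Sum>k<N. r k) = real n \<and> (\<Sum>k<N. real k * r k) = real n ^ 2 - real n * r 0)"
      using alt_sums[of L r N, OF A(1) A(2) rfin] .
    from H show False
    proof (elim disjE exE conjE)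
      fix n assume "L = 2*n" "(\<Sum>k<N. r k) = real n + r 0" "(\<Sum>k<N. real k * r k) = real n * (real n + r 0)"
      hence ev: "x = real n + r 0" "x * (real m + \<alpha>) = real n * (real n + r 0)" using xdef mx by auto
      hence "x * (real m + \<alpha>) = x * real n" by (simp add: algebra_simps)
      hence "real m + \<alpha> = real n" using x0 by simp
      thus False using intc by blast
    next
      fix n assume "Suc L = 2*n" "(\<Sum>k<N. r k) = real n" "(\<Sum>k<N. real k * r k) = real n ^ 2 - real n * r 0"
      hence od: "x = real n" "x * (real m + \<alpha>) = real n ^ 2 - real n * r 0" using xdef mx by auto
      hence n0: "0 < n" using x0 by simp
      have "x * (real m + \<alpha>) = x * (real n - r 0)" using od by (simp add: power2_eq_square algebra_simps)
      hence e: "real m + \<alpha> = real n - r 0" using x0 by simp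
      from r01 show False
      proof
        assume "r 0 = 0" thus False using e intc by simp
      next
        assume "r 0 = 1"
        hence "real m + \<alpha> = real (n - 1)" using e n0 by (simp add: of_nat_diff)
        thus False using intc by blast
      qed
    qed
  qed
  have nc: "\<not> (0 < s j \<and> 0 < s (Suc j))" for j
  proof
    assume sj: "0 < s j \<and> 0 < s (Suc j)"
    hence "D j = 0" "D (Suc j) = 0" using Deq by auto
    hence rsum: "r j + r (Suc j) = 1" using D_Suc[of j] by simp
    consider (AA) "0 < r j" "0 < r (Suc j)" | (B) "r j = 0" | (C) "r (Suc j) = 0"
      using r_nn[of j] r_nn[of "Suc j"] by force
    thus False
    proof cases
      case AA
      hence bb: "0 < r 0" "0 < r 1" "0 < s 1" using BB0[of j] sj by auto
      then obtain L where L1: "1 \<le> L" and pr: "\<forall>i<L. r i + r (Suc i) = 1 \<and> s i + s (Suc i) = 1"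
        and bz: "\<forall>i>L. r i = 0 \<and> s i = 0" using brun by blast
      have ar: "\<forall>i<L. r i + r (Suc i) = 1" "\<forall>i>L. r i = 0" using pr bz by auto
      have as: "\<forall>i<L. s i + s (Suc i) = 1" "\<forall>i>L. s i = 0" using pr bz by auto
      have r01: "r 0 + r 1 = 1" "s 0 + s 1 = 1" using pr L1 by auto
      have Hr: "(\<exists>n. L = 2*n \<and> (\<Sum>k<N. r k) = real n + r 0 \<and> (\<Sum>k<N. real k * r k) = real n * (real n + r 0))
       \<or> (\<exists>n. Suc L = 2*n \<and> (\<Sum>k<N. r k) = real n \<and> (\<Sum>k<N. real k * r k) = real n ^ 2 - real n * r 0)"
        using alt_sums[of L r N, OF ar(1) ar(2) rfin] .
      have Hs: "(\<exists>n. L = 2*n \<and> (\<Sum>k<N. s k) = real n + s 0 \<and> (\<Sum>k<N. real k * s k) = real n * (real n + s 0))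
       \<or> (\<exists>n. Suc L = 2*n \<and> (\<Sum>k<N. s k) = real n \<and> (\<Sum>k<N. real k * s k) = real n ^ 2 - real n * s 0)"
        using alt_sums[of L s N, OF as(1) as(2) sfin] .
      have oddcase: "\<exists>n. Suc L = 2*n \<and> x = real n \<and> x * (real m + \<alpha>) = real n ^ 2 - real n * r 0
             \<and> y = real n \<and> y * b = real n ^ 2 - real n * s 0" if "odd L"
      proof -
        from Hr that obtain n where n: "Suc L = 2*n" "(\<Sum>k<N. r k) = real n" "(\<Sum>k<N. real k * r k) = real n ^ 2 - real n * r 0"
          by auto
        from Hs that obtain n' where n': "Suc L = 2*n'" "(\<Sum>k<N. s k) = real n'" "(\<Sum>k<N. real k * s k) = real n' ^ 2 - real n' * s 0"
          by auto
        have "n' = n" using n n' by simp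
        thus ?thesis using n n' xdef ydef mx my by auto
      qed
      have evcase: "\<exists>n. L = 2*n \<and> x = real n + r 0 \<and> x * (real m + \<alpha>) = real n * (real n + r 0)" if "even L"
      proof -
        from Hr show ?thesis
        proof (elim disjE exE conjE)
          fix n assume "L = 2*n" "(\<Sum>k<N. r k) = real n + r 0" "(\<Sum>k<N. real k * r k) = real n * (real n + r 0)"
          thus ?thesis using xdef mx by auto
        next
          fix n assume "Suc L = 2*n"
          hence "odd L" by presburger
          thus ?thesis using that by simp
        qed
      qed
      show False
      proof (cases "even L")
        case True
        then obtain n where ev: "L = 2*n" "x = real n + r 0" "x * (real m + \<alpha>) = real n * (real n + r 0)"
          using evcase by blast
        hence "x * (real m + \<alpha>) = x * real n" by (simp add: algebra_simps)
        hence "real m + \<alpha> = real n" using x0 by simp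
        thus False using intc by blast
      next
        case False
        then obtain n where od: "Suc L = 2*n" "x = real n" "x * (real m + \<alpha>) = real n ^ 2 - real n * r 0"
             "y = real n" "y * b = real n ^ 2 - real n * s 0" using oddcase by blast
        have "x * (real m + \<alpha>) = x * (real n - r 0)" using od by (simp add: power2_eq_square algebra_simps)
        hence e: "real m + \<alpha> = real n - r 0" using x0 by simp
        have "y * b = y * (real n - s 0)" using od by (simp add: power2_eq_square algebra_simps)
        hence eb: "b = real n - s 0" using ypos by simp
        have "real m < real n" using e bb al by linarith
        hence "m < n" by simp
        moreover have "real n < real m + 2" using e r01 bb al r_nn[of 1] by linarith
        hence "n < m + 2" by linarith
        ultimately have "n = m + 1" by simp
        thus False using eb b r01 bb by simp
      qed
    next
      case B
      hence r1: "r (Suc j) = 1" using rsum by simp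
      have pt: "\<forall>i \<le> Suc j. r i = pat (Suc j) i"
        using Qchain[of j] sj B r1 unfolding pat_def by auto
      obtain L where "\<forall>i<L. r i + r (Suc i) = 1" "\<forall>i>L. r i = 0"
        using upward[OF pt, of "Suc j"] sj by auto
      moreover have "r 0 = 0 \<or> r 0 = 1" using pt unfolding pat_def by auto
      ultimately show False using alt_contra by blast
    next
      case C
      hence rj: "r j = 1" using rsum by simp
      show False
      proof (cases j)
        case 0
        have pt: "\<forall>i \<le> 1. r i = pat 0 i" using rj C 0 unfolding pat_def by (auto simp: le_Suc_eq)
        obtain L where "\<forall>i<L. r i + r (Suc i) = 1" "\<forall>i>L. r i = 0"
          using upward[OF pt, of 0] s0 by auto
        moreover have "r 0 = 0 \<or> r 0 = 1" using rj 0 by simp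
        ultimately show False using alt_contra by blast
      next
        case (Suc j0)
        have sj0: "0 < s j0"
        proof (rule ccontr)
          assume "\<not> 0 < s j0" hence z: "s j0 = 0" using s_nn[of j0] by simp
          have "E j = 0" using rj Eeq by simp
          thus False using E_Suc[of j0] E_Suc[of j] Ele[of j0] Ele[of "Suc j"] z sj Suc by simp
        qed
        hence "D j0 = 0" by (rule Deq)
        hence rj0: "r j0 = 0" using D_Suc[of j0] \<open>D j = 0\<close> rj Suc by simp
        have pt: "\<forall>i \<le> j. r i = pat j i"
          using Qchain[of j0] sj0 rj0 rj Suc unfolding pat_def by auto
        obtain L where "\<forall>i<L. r i + r (Suc i) = 1" "\<forall>i>L. r i = 0"
          using upward[OF pt, of j] sj by auto
        moreover have "r 0 = 0 \<or> r 0 = 1" using pt unfolding pat_def by auto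
        ultimately show False using alt_contra by blast
      qed
    qed
  qed
  obtain n where sn: "\<And>k. 0 < s k \<longleftrightarrow> (even k \<and> k \<le> 2*n)" using evens nc by blast
  have sz: "s k = 0" if "odd k \<or> 2*n < k" for k using sn[of k] s_nn[of k] that by auto
  have szo: "s k = 0" if "odd k" for k using sz that by blast
  have szb: "s k = 0" if "2*n < k" for k using sz that by blast
  have n1: "1 \<le> n"
  proof (rule ccontr)
    assume "\<not> 1 \<le> n" hence "n = 0" by simp
    hence "real k * s k = 0" for k using sz[of k] by (cases k) auto
    hence "(\<Sum>k<N. real k * s k) = 0" by (simp only: sum.neutral_const)
    thus False using my ypos b by simp
  qed
  have rbig: "r k = 0" if kb: "2*n + 1 < k" for k
  proof (rule ccontr)
    assume "r k \<noteq> 0" hence "0 < r k" using r_nn[of k] by simp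
    hence Ek: "E k = 0" by (rule Eeq)
    obtain k' where k: "k = Suc k'" "2*n < k'" using kb by (cases k) auto
    have "s k' = 0" "s k = 0" using sz k by auto
    thus False using E_Suc[of k'] Ek Ele[of k'] k by simp
  qed
  have s2i: "s (2*i) = 1 \<or> (i = n \<and> (\<forall>k\<ge>2*n. r k = 0))" if i1: "1 \<le> i" "i \<le> n" for i
  proof -
    obtain i0 where i0: "2*i = Suc i0" using i1 by (cases i) auto
    have sp: "0 < s (2*i)" using sn i1 by simp
    hence "D (2*i) = 0" by (rule Deq)
    hence rs: "r i0 + r (2*i) \<ge> 1" using D_Suc[of i0] Dle[of i0] i0 by simp
    have "odd i0" using i0 by presburger
    hence so: "s i0 = 0" "s (Suc (2*i)) = 0" using szo by auto
    show ?thesis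
    proof (cases "0 < r (2*i)")
      case True
      hence "E (2*i) = 0" by (rule Eeq)
      hence "s (2*i) \<ge> 1" using E_Suc[of i0] Ele[of i0] so i0 by simp
      thus ?thesis using s_le1[of "2*i"] i1 by simp
    next
      case False
      hence r2: "r (2*i) = 0" using r_nn[of "2*i"] by simp
      show ?thesis
      proof (cases "0 < r (Suc (2*i))")
        case True
        hence "E (Suc (2*i)) = 0" by (rule Eeq)
        hence "s (2*i) \<ge> 1" using E_Suc[of "2*i"] Ele[of "2*i"] so by simp
        thus ?thesis using s_le1[of "2*i"] i1 by simp
      next
        case False
        hence r3: "r (Suc (2*i)) = 0" using r_nn[of "Suc (2*i)"] by simp
        have za: "\<forall>k>2*i. r k = 0" using zeros_after[OF r2 r3] .
        have "i = n"
        proof (rule ccontr)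
          assume "i \<noteq> n" hence "i < n" using i1 by simp
          hence "0 < s (Suc (Suc (2*i)))" using sn[of "Suc (Suc (2*i))"] by simp
          hence "D (Suc (Suc (2*i))) = 0" by (rule Deq)
          hence "r (Suc (2*i)) + r (Suc (Suc (2*i))) \<ge> 1" using D_Suc[of "Suc (2*i)"] Dle[of "Suc (2*i)"] by simp
          thus False using r3 za by simp
        qed
        moreover have "\<forall>k\<ge>2*n. r k = 0"
        proof (intro allI impI)
          fix k assume "2*n \<le> k"
          thus "r k = 0" using za r2 \<open>i = n\<close> by (cases "k = 2*n") auto
        qed
        ultimately show ?thesis by simp
      qed
    qed
  qed
  define \<sigma> where "\<sigma> = s (2*n)"
  have sig: "0 < \<sigma>" "\<sigma> \<le> 1" using sn[of "2*n"] s_le1[of "2*n"] n1 unfolding \<sigma>_def by auto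
  have s2i': "s (2*i) = 1" if "1 \<le> i" "i < n" for i using s2i[of i] that by auto
  obtain n1' where nn: "n = Suc n1'" using n1 by (cases n) auto
  have partial: "i < n \<Longrightarrow> (\<Sum>k<2*i+1. s k) = s 0 + real i \<and> (\<Sum>k<2*i+1. real k * s k) = real i * (real i + 1)" for i
  proof (induction i)
    case 0 thus ?case by simp
  next
    case (Suc i)
    have e: "2 * Suc i + 1 = Suc (Suc (2*i+1))" by simp
    have "s (2*i+1) = 0" using szo by simp
    moreover have "s (Suc (2*i+1)) = 1" using s2i'[of "Suc i"] Suc.prems by simp
    ultimately show ?case using Suc unfolding e by (simp add: algebra_simps)
  qed
  have ysum: "(\<Sum>k<N. s k) = s 0 + real n - 1 + \<sigma>" and mysum: "(\<Sum>k<N. real k * s k) = real n * (real n - 1) + 2 * real n * \<sigma>"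
  proof -
    have e: "2*n + 1 = Suc (Suc (2*n1'+1))" using nn by simp
    have p: "(\<Sum>k<2*n1'+1. s k) = s 0 + real n1'" "(\<Sum>k<2*n1'+1. real k * s k) = real n1' * (real n1' + 1)"
      using partial[of n1'] nn by auto
    have z1: "s (2*n1'+1) = 0" using szo by simp
    have ss: "Suc (2*n1'+1) = 2*n" using nn by simp
    have "(\<Sum>k<N. s k) = (\<Sum>k<2*n+1. s k)" using sum_supp_eq[of "2*n+1" s N] sz sfin by simp
    also have "\<dots> = s 0 + real n - 1 + \<sigma>" unfolding e using p z1 ss nn unfolding \<sigma>_def by simp
    finally show "(\<Sum>k<N. s k) = s 0 + real n - 1 + \<sigma>" .
    have "(\<Sum>k<N. real k * s k) = (\<Sum>k<2*n+1. real k * s k)"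
      using sum_supp_eq[of "2*n+1" "\<lambda>k. real k * s k" N] sz sfin by simp
    also have "\<dots> = real n * (real n - 1) + 2 * real n * \<sigma>" unfolding e using p z1 ss nn unfolding \<sigma>_def
      by (simp add: algebra_simps)
    finally show "(\<Sum>k<N. real k * s k) = real n * (real n - 1) + 2 * real n * \<sigma>" .
  qed
  have xsum: "(\<Sum>i<2*n+2. r i) = x" unfolding xdef using sum_supp_eq[of "2*n+2" r N] rbig rfin by simp
  have Dtop: "D (2*n+2) \<le> 0" by (rule Dle)
  hence xub: "2*x - 2*n - 2 - p2 \<le> 0" using xsum rbig[of "2*n+2"] unfolding D_def by simp
  have D2n: "D (2*n) = 0" using Deq sig unfolding \<sigma>_def by simp
  have exc: "x = real n + p2/2" if "\<forall>k\<ge>2*n. r k = 0"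
  proof -
    have "(\<Sum>i<2*n. r i) = x" unfolding xdef using sum_supp_eq[of "2*n" r N] that rfin by simp
    thus ?thesis using D2n that unfolding D_def by simp
  qed
  have I1': "x * (real m + \<alpha>) + y * b + p1 * x + p2 * y = 2 * x * y"
    using I1 xdef ydef mx my by simp
  show ?thesis
  proof (cases "r 0 = 0")
    case False
    hence r0: "0 < r 0" using r_nn[of 0] by simp
    have p1s: "p1 = s 0" using Eeq[OF r0] E_0 by simp
    have p2r: "p2 = r 0" using p2_eq .
    have s01: "s 0 = 1"
    proof (cases "0 < r 1")
      case True
      hence "E 1 = 0" by (rule Eeq)
      moreover have "s 1 = 0" using szo by simp
      ultimately show ?thesis using E_Suc[of 0] Eeq[OF r0] by simp
    next
      case False
      have "\<exists>k>0. 0 < r k"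
      proof (rule ccontr)
        assume nex: "\<not> (\<exists>k>0. 0 < r k)"
        have na: "r k \<le> 0" if "0 < k" for k
        proof (rule ccontr)
          assume "\<not> r k \<le> 0" hence "0 < r k" by simp
          hence "\<exists>k>0. 0 < r k" using that by blast
          thus False using nex by blast
        qed
        have "real k * r k = 0" for k
        proof (cases "k = 0")
          case False thus ?thesis using na[of k] r_nn[of k] by simp
        qed simp
        hence "(\<Sum>k<N. real k * r k) = 0" by (simp only: sum.neutral_const)
        thus False using mx x0 al by simp
      qed
      then obtain k where "0 < k" "0 < r k" by blast
      hence "0 < r (Suc 0) \<or> 0 < r (Suc (Suc 0))" using up_gapX[of 0 k] r0 by simp
      hence "0 < r 2" using False by (simp add: numeral_2_eq_2)
      hence "E 2 = 0" by (rule Eeq)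
      moreover have "s 1 = 0" using szo by simp
      moreover have "s 2 \<le> 1" using s_le1[of 2] by simp
      moreover have "s 0 \<le> 1" using s0_le1[OF r0] .
      ultimately show ?thesis using E_Suc[of 0] E_Suc[of 1] Eeq[OF r0] by (simp add: numeral_2_eq_2)
    qed
    have yv: "y = real n + \<sigma>" using ysum ydef s01 by simp
    show ?thesis
    proof (cases "\<sigma> = 1")
      case True
      have yn: "y = real n + 1" using yv True by simp
      have "y * b = real n * (real n + 1)" using my mysum True by (simp add: algebra_simps)
      hence "y * b = y * real n" using yn by (simp add: algebra_simps)
      hence bn: "b = real n" using ypos by simp
      have xle: "x \<le> real n + 1 + r 0 / 2" using xub p2r by simp
      have A: "x * (real m + \<alpha>) = (2*real n + 1) * x - (real n + 1) * (real n + r 0)"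
        using I1' p1s p2r s01 yn bn by (simp add: algebra_simps)
      have B: "real n * x \<le> real n * (real n + 1 + r 0 / 2)" using xle by (simp add: mult_left_mono)
      have C: "0 \<le> real n * r 0" using r0 by simp
      have eq: "x * (real m + \<alpha>) - x * (real n + 1) = real n * x - (real n + 1) * (real n + r 0)"
        using A by (simp add: algebra_simps)
      have h: "real n * (real n + 1 + r 0 / 2) - (real n + 1) * (real n + r 0) = - (real n * r 0 / 2) - r 0"
        by (simp add: algebra_simps)
      have "x * (real m + \<alpha>) \<le> x * (real n + 1)" using eq h B C r0 by linarith
      hence "real m + \<alpha> \<le> real n + 1" using x0 by simp
      hence "m < n + 1" using al by linarith
      thus ?thesis using bn b by simp
    next
      case False
      hence exc': "\<forall>k\<ge>2*n. r k = 0" using s2i[of n] n1 unfolding \<sigma>_def by auto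
      have xv: "x = real n + r 0 / 2" using exc[OF exc'] p2r by simp
      have "y * b = real n * (real n - 1) + 2 * real n * \<sigma>" using my mysum by simp
      have MX: "x * (real m + \<alpha>) = real n ^ 2 - r 0 / 2"
        using I1' p1s p2r s01 xv yv \<open>y * b = _\<close> by (simp add: power2_eq_square algebra_simps)
      have xn: "x * real n = real n ^ 2 + real n * r 0 / 2" using xv by (simp add: power2_eq_square algebra_simps)
      have "0 \<le> real n * r 0" using r0 by simp
      hence "x * (real m + \<alpha>) \<le> x * real n" using MX xn r0 by linarith
      hence "real m + \<alpha> \<le> real n" using x0 by simp
      hence mn: "m < n" using al by linarith
      have "y * b \<ge> y * (real n - 1)" using \<open>y * b = _\<close> yv sig by (simp add: algebra_simps)
      hence "b \<ge> real n - 1" using ypos by simp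
      thus ?thesis using mn b by linarith
    qed
  next
    case True
    hence r0z: "r 0 = 0" by simp
    hence p2z: "p2 = 0" using p2_eq by simp
    have s2: "0 < s 2" using sn[of 2] n1 by simp
    have p1v: "p1 = 2 * s 0 - 1"
    proof -
      have "D 2 = 0" using s2 by (rule Deq)
      hence "r 1 + r 2 \<ge> 1" using D_Suc[of 1] Dle[of 1] by (simp add: numeral_2_eq_2)
      have s1: "s 1 = 0" using szo by simp
      have E1: "E 1 = 2 * s 0 - 1 - p1" using E_Suc[of 0] E_0 s1 by simp
      show ?thesis
      proof (cases "0 < r 1")
        case True thus ?thesis using Eeq[OF True] E1 by simp
      next
        case False
        hence "0 < r 2" using \<open>r 1 + r 2 \<ge> 1\<close> r_nn[of 1] by simp
        hence "E 2 = 0" by (rule Eeq)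
        hence "s 2 \<ge> 1" using E_Suc[of 1] Ele[of 1] s1 by (simp add: numeral_2_eq_2)
        hence "s 2 = 1" using s_le1[of 2] by simp
        hence "E 1 = 0" using \<open>E 2 = 0\<close> E_Suc[of 1] s1 by (simp add: numeral_2_eq_2)
        thus ?thesis using E1 by simp
      qed
    qed
    have yv: "y = s 0 + real n - 1 + \<sigma>" using ysum ydef by simp
    have ybv: "y * b = real n * (real n - 1) + 2 * real n * \<sigma>" using my mysum by simp
    have MX: "x * (real m + \<alpha>) = 2 * x * (real n - 1 + \<sigma>) + x - real n * (real n - 1) - 2 * real n * \<sigma>"
    proof -
      have "x * (real m + \<alpha>) = 2*x*y - y*b - p1*x - p2*y" using I1' by linarith
      also have "\<dots> = 2*x*y - (real n * (real n - 1) + 2 * real n * \<sigma>) - (2 * s 0 - 1) * x"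
        using ybv p1v p2z by simp
      also have "\<dots> = 2 * x * (real n - 1 + \<sigma>) + x - real n * (real n - 1) - 2 * real n * \<sigma>"
        by (simp only: yv) (simp add: algebra_simps)
      finally show ?thesis .
    qed
    show ?thesis
    proof (cases "\<sigma> = 1")
      case False
      hence exc': "\<forall>k\<ge>2*n. r k = 0" using s2i[of n] n1 unfolding \<sigma>_def by auto
      have xv: "x = real n" using exc[OF exc'] p2z by simp
      have "x * (real m + \<alpha>) = x * real n" using MX xv by (simp add: algebra_simps)
      hence "real m + \<alpha> = real n" using x0 by simp
      thus ?thesis using intc by blast
    next
      case True
      have MX2: "x * (real m + \<alpha>) = (2 * real n + 1) * x - real n * (real n + 1)"
        using MX True by (simp add: algebra_simps)
      have xle: "x \<le> real n + 1" using xub p2z by simp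
      have xge: "real n \<le> x"
      proof -
        have "(\<Sum>i<2*n. r i) \<le> x" using sum_lt_le_x[of "2*n"] xdef by simp
        moreover have "(\<Sum>i<Suc (2*n). r i) \<le> x" using sum_lt_le_x[of "Suc (2*n)"] xdef by simp
        hence "(\<Sum>i<2*n. r i) + r (2*n) \<le> x" by simp
        ultimately show ?thesis using D2n p2z unfolding D_def by simp
      qed
      have "x * (real m + \<alpha>) \<ge> x * real n"
      proof -
        have "(real n + 1) * real n \<le> (real n + 1) * x" using xge by (simp add: mult_left_mono)
        thus ?thesis using MX2 by (simp add: algebra_simps)
      qed
      hence ge: "real n \<le> real m + \<alpha>" using x0 by simp
      have "x * (real m + \<alpha>) \<le> x * (real n + 1)"
      proof -
        have "real n * x \<le> real n * (real n + 1)" using xle by (simp add: mult_left_mono)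
        thus ?thesis using MX2 by (simp add: algebra_simps)
      qed
      hence le: "real m + \<alpha> \<le> real n + 1" using x0 by simp
      have "real n < real (m + 1)" using ge al by simp
      hence "n < m + 1" by (simp only: of_nat_less_iff)
      moreover have "real m < real (n + 1)" using le al by simp
      hence "m < n + 1" by (simp only: of_nat_less_iff)
      ultimately have mn: "m = n" by simp
      have xa: "x * \<alpha> = (real m + 1) * (x - real m)" using MX2 mn by (simp add: algebra_simps)
      have "0 < x * \<alpha>" using x0 al by simp
      hence "0 < (real m + 1) * (x - real m)" using xa by simp
      hence xgt: "real m < x" by (simp add: zero_less_mult_iff)
      have "x * (1 - \<alpha>) = real m * (real m + 1 - x)" using xa by (simp add: algebra_simps)
      moreover have "0 < x * (1 - \<alpha>)" using x0 al by simp
      ultimately have "0 < real m * (real m + 1 - x)" by simp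
      hence xlt: "x < real m + 1" using m1 by (simp add: zero_less_mult_iff)
      have sk: "\<forall>k. 0 < k \<longrightarrow> s k = (if even k \<and> k \<le> 2*m then 1 else 0)"
      proof (intro allI impI)
        fix k :: nat assume k0: "0 < k"
        show "s k = (if even k \<and> k \<le> 2*m then 1 else 0)"
        proof (cases "even k \<and> k \<le> 2*m")
          case True
          then obtain i where i: "k = 2*i" by (auto elim: evenE)
          hence "1 \<le> i" "i \<le> n" using k0 True mn by auto
          hence "s k = 1" using s2i'[of i] True i mn \<open>\<sigma> = 1\<close> unfolding \<sigma>_def
            by (cases "i = n") auto
          thus ?thesis using True by simp
        next
          case False
          hence "odd k \<or> 2*n < k" using mn by auto
          thus ?thesis using sz[of k] False by simp
        qed
      qed
      show ?thesis using r0z p2z p1v yv \<open>\<sigma> = 1\<close> mn xgt xlt sk rbig ybv xa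
        by (simp add: algebra_simps)
    qed
  qed
qed

end


definition ind :: "bool \<Rightarrow> real" where "ind b = (if b then 1 else 0)"

definition rg :: "nat \<Rightarrow> real \<Rightarrow> real \<Rightarrow> nat \<Rightarrow> nat \<Rightarrow> real" where
 "rg n x h j k = (if k = 0 then 0
    else if k = 2*n+1 then (x - real n) - h * ind (j \<le> n)
    else if k \<le> 2*n then (if odd k then 1 - h * (ind (j \<le> (k+1) div 2) + ind (j \<le> (k-1) div 2))
                       else 2*h*ind (j \<le> k div 2))
    else 0)"

lemma rg_even: "1 \<le> i \<Longrightarrow> i \<le> n \<Longrightarrow> rg n x h j (2*i) = 2*h*ind (j \<le> i)"
  unfolding rg_def by auto

lemma rg_odd: "i < n \<Longrightarrow> rg n x h j (2*i+1) = 1 - h * (ind (j \<le> Suc i) + ind (j \<le> i))"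
  unfolding rg_def by auto

lemma rg_top: "rg n x h j (2*n+1) = (x - real n) - h * ind (j \<le> n)"
  unfolding rg_def by auto

lemma rg_big: "2*n+1 < k \<Longrightarrow> rg n x h j k = 0"
  unfolding rg_def by auto

lemma rg_zero: "rg n x h j 0 = 0" unfolding rg_def by simp

lemma rg_prefix: "1 \<le> j \<Longrightarrow> i \<le> n \<Longrightarrow> (\<Sum>k<2*i. rg n x h j k) = real i - h * ind (j \<le> i)"
proof (induction i)
  case 0 thus ?case by (simp add: ind_def)
next
  case (Suc i)
  have e: "2 * Suc i = Suc (Suc (2*i))" by simp
  have a: "rg n x h j (2*i) = 2*h*ind (j \<le> i)"
    using rg_even[of i n x h j] rg_zero Suc.prems by (cases "i = 0") (auto simp: ind_def)
  have b: "rg n x h j (Suc (2*i)) = 1 - h * (ind (j \<le> Suc i) + ind (j \<le> i))"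
    using rg_odd[of i n x h j] Suc.prems by simp
  show ?case unfolding e using Suc a b by (simp add: algebra_simps)
qed

definition Dg :: "(nat \<Rightarrow> real) \<Rightarrow> nat \<Rightarrow> real" where
  "Dg f k = 2 * (\<Sum>i<k. f i) + f k - real k"

lemma gen_D:
  assumes j: "1 \<le> j" "j \<le> Suc n" and n1: "1 \<le> n" and hx: "h \<le> real n + 1 - x" "0 \<le> h" "x < real n + 1"
  shows "Dg (rg n x h j) k \<le> 0" and "\<And>i. i \<le> n \<Longrightarrow> Dg (rg n x h j) (2*i) = 0"
    and "(\<Sum>k<2*n+2. rg n x h j k) = x"
proof -
  let ?f = "rg n x h j"
  have pre: "\<And>i. i \<le> n \<Longrightarrow> (\<Sum>k<2*i. ?f k) = real i - h * ind (j \<le> i)" using rg_prefix j by simp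
  show ev: "\<And>i. i \<le> n \<Longrightarrow> Dg ?f (2*i) = 0"
  proof -
    fix i assume "i \<le> n"
    thus "Dg ?f (2*i) = 0"
      using pre[of i] rg_even[of i n x h j] rg_zero j by (cases "i = 0") (auto simp: Dg_def ind_def)
  qed
  have s2n1: "(\<Sum>k<2*n+1. ?f k) = real n + h * ind (j \<le> n)"
    using pre[of n] rg_even[of n n x h j] n1 by simp
  have tot: "(\<Sum>k<2*n+2. ?f k) = x"
  proof -
    have "(\<Sum>k<2*n+2. ?f k) = (\<Sum>k<2*n+1. ?f k) + ?f (2*n+1)" by simp
    thus ?thesis using s2n1 rg_top[of n x h j] by simp
  qed
  thus "(\<Sum>k<2*n+2. rg n x h j k) = x" .
  show "Dg ?f k \<le> 0"
  proof (cases "2*n+1 < k")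
    case True
    have "(\<Sum>i<k. ?f i) = (\<Sum>i<2*n+2. ?f i) + (\<Sum>i\<in>{2*n+2..<k}. ?f i)"
    proof -
      have "2*n+2 \<le> k" using True by simp
      thus ?thesis by (metis atLeast0LessThan sum.atLeastLessThan_concat zero_le)
    qed
    also have "(\<Sum>i\<in>{2*n+2..<k}. ?f i) = 0" using rg_big by auto
    finally have "(\<Sum>i<k. ?f i) = x" using tot by simp
    thus ?thesis using rg_big[OF True] True hx n1 unfolding Dg_def by simp
  next
    case False
    show ?thesis
    proof (cases "even k")
      case True
      then obtain i where "k = 2*i" by (auto elim: evenE)
      thus ?thesis using ev[of i] False by simp
    next
      case odd: False
      then obtain i where k: "k = 2*i+1" by (auto elim: oddE)
      hence "i \<le> n" using False by simp
      show ?thesis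
      proof (cases "i = n")
        case True
        have "Dg ?f k = (\<Sum>k<2*n+1. ?f k) + (\<Sum>k<2*n+2. ?f k) - real (2*n+1)"
          using k True unfolding Dg_def by simp
        also have "\<dots> = real n + h * ind (j \<le> n) + x - 2 * real n - 1" using s2n1 tot by simp
        finally show ?thesis using hx by (simp add: ind_def)
      next
        case False
        hence "i < n" using \<open>i \<le> n\<close> by simp
        have "Dg ?f k = 2 * (\<Sum>k<2*i. ?f k) + 2 * ?f (2*i) + ?f (2*i+1) - real (2*i+1)"
          using k unfolding Dg_def by simp
        also have "\<dots> = 2 * (real i - h * ind (j \<le> i)) + 4*h*ind (j \<le> i) + 1 - h * (ind (j \<le> Suc i) + ind (j \<le> i)) - real (2*i+1)"
          using pre[of i] rg_odd[OF \<open>i < n\<close>, of x h j] rg_even[of i n x h j] rg_zero \<open>i < n\<close> j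
          by (cases "i = 0") (auto simp: ind_def)
        also have "\<dots> = h * ind (j \<le> i) - h * ind (j \<le> Suc i)" by (simp add: algebra_simps)
        finally show ?thesis using hx by (simp add: ind_def)
      qed
    qed
  qed
qed

lemma hull_decomp:
  fixes r :: "nat \<Rightarrow> real" and n :: nat and x h :: real
  assumes n1: "1 \<le> n" and r0: "r 0 = 0" and rbig: "\<And>k. 2*n+1 < k \<Longrightarrow> r k = 0"
    and rsum: "(\<Sum>k<2*n+2. r k) = x"
    and Deq: "\<And>i. i \<le> n \<Longrightarrow> Dg r (2*i) = 0" and Dle: "\<And>k. Dg r k \<le> 0"
    and rnn: "\<And>k. 0 \<le> r k"
    and h0: "0 < h"
    and hc: "(h = x - real n) \<or> (h = real n + 1 - x)"
  shows "\<exists>lam. (\<forall>j. 0 \<le> lam j) \<and> (\<Sum>j\<in>{1..Suc n}. lam j) = 1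
    \<and> (\<forall>k. r k = (\<Sum>j\<in>{1..Suc n}. lam j * rg n x h j k))"
proof -
  define lam where "lam = (\<lambda>j. if j \<le> n then - Dg r (2*j-1) / h else 1 - (\<Sum>l\<in>{1..n}. - Dg r (2*l-1) / h))"
  define u where "u i = (\<Sum>k<2*i. r k)" for i
  have u0: "u 0 = 0" unfolding u_def by simp
  have r2i: "r (2*i) = real (2*i) - 2 * u i" if "i \<le> n" for i
    using Deq[OF that] unfolding Dg_def u_def by simp
  have Dodd: "Dg r (2*i+1) = u (Suc i) - u i - 1" if "i \<le> n" for i
  proof -
    have "Dg r (2*i+1) = 2 * u i + 2 * r (2*i) + r (2*i+1) - real (2*i+1)"
      unfolding Dg_def u_def by simp
    moreover have "u (Suc i) = u i + r (2*i) + r (2*i+1)" unfolding u_def by simp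
    ultimately show ?thesis using r2i[OF that] by simp
  qed
  have lamj: "lam j = (1 + u (j-1) - u j) / h" if j1: "1 \<le> j" "j \<le> n" for j
  proof -
    obtain i where i: "j = Suc i" using j1 by (cases j) auto
    have "2*j - 1 = 2*i+1" using i by simp
    hence D: "- Dg r (2*j-1) = 1 + u (j-1) - u j" using Dodd[of i] i j1 by simp
    have "lam j = (- Dg r (2*j-1)) / h" unfolding lam_def using j1 by simp
    thus ?thesis unfolding D .
  qed
  have prefix: "(\<Sum>l\<in>{1..i}. lam l) = (real i - u i) / h" if "i \<le> n" for i
    using that
  proof (induction i)
    case 0 thus ?case by (simp add: u0)
  next
    case (Suc i)
    have "(\<Sum>l\<in>{1..Suc i}. lam l) = (\<Sum>l\<in>{1..i}. lam l) + lam (Suc i)" by simp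
    also have "\<dots> = (real i - u i) / h + (1 + u i - u (Suc i)) / h"
      using Suc lamj[of "Suc i"] by simp
    also have "\<dots> = ((real i - u i) + (1 + u i - u (Suc i))) / h" by (simp only: add_divide_distrib)
    also have "\<dots> = (real (Suc i) - u (Suc i)) / h" by simp
    finally show ?case .
  qed
  have lamtop: "lam (Suc n) = 1 - (real n - u n) / h"
  proof -
    have "(\<Sum>l\<in>{1..n}. lam l) = (\<Sum>l\<in>{1..n}. - Dg r (2*l-1) / h)" unfolding lam_def by simp
    thus ?thesis using prefix[of n] unfolding lam_def by simp
  qed
  have total: "(\<Sum>j\<in>{1..Suc n}. lam j) = 1" using prefix[of n] lamtop by simp
  have s2n1: "(\<Sum>k<2*n+1. r k) = 2 * real n - u n"
    using r2i[of n] unfolding u_def by simp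
  have r2n1: "r (2*n+1) = x + u n - 2 * real n"
    using rsum s2n1 by simp
  have D2n1: "Dg r (2*n+1) = x - u n - 1" using Dodd[of n] rsum unfolding u_def by simp
  have L0: "\<And>j. 0 \<le> lam j"
  proof -
    fix j
    show "0 \<le> lam j"
    proof (cases "j \<le> n")
      case True
      have "Dg r (2*j-1) / h \<le> 0" using Dle[of "2*j-1"] h0 by (simp add: divide_nonpos_pos)
      thus ?thesis unfolding lam_def using True by simp
    next
      case False
      have "real n - u n \<le> h"
        using hc r2n1 rnn[of "2*n+1"] D2n1 Dle[of "2*n+1"] by auto
      hence "(real n - u n) / h \<le> 1" using h0 by simp
      hence "0 \<le> lam (Suc n)" using lamtop by simp
      moreover have "lam j = lam (Suc n)" using False unfolding lam_def by simp
      ultimately show ?thesis by simp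
    qed
  qed
  have filt: "(\<Sum>j\<in>{1..Suc n}. lam j * ind (j \<le> i)) = (real i - u i) / h" if "i \<le> n" for i
  proof -
    have "(\<Sum>j\<in>{1..Suc n}. lam j * ind (j \<le> i)) = (\<Sum>j\<in>{1..Suc n}. if j \<le> i then lam j else 0)"
      by (intro sum.cong) (auto simp: ind_def)
    also have "\<dots> = (\<Sum>j\<in>{j\<in>{1..Suc n}. j \<le> i}. lam j)" by (rule sum.inter_filter[symmetric]) simp
    also have "{j\<in>{1..Suc n}. j \<le> i} = {1..i}" using that by auto
    finally show ?thesis using prefix[OF that] by simp
  qed
  have L2: "\<And>k. r k = (\<Sum>j\<in>{1..Suc n}. lam j * rg n x h j k)"
  proof -
    fix k
    have "k = 0 \<or> 2*n+1 < k \<or> k = 2*n+1 \<or> (\<exists>i. k = 2*i \<and> 1 \<le> i \<and> i \<le> n) \<or> (\<exists>i. k = 2*i+1 \<and> i < n)"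
    proof (cases "even k")
      case True
      then obtain i where "k = 2*i" by (auto elim: evenE)
      thus ?thesis by (cases "i = 0"; cases "i \<le> n") auto
    next
      case False
      then obtain i where "k = 2*i+1" by (auto elim: oddE)
      thus ?thesis by (cases "i < n"; cases "i = n") auto
    qed
    then consider (z) "k = 0" | (big) "2*n+1 < k" | (top) "k = 2*n+1" | (ev) i where "k = 2*i" "1 \<le> i" "i \<le> n"
      | (od) i where "k = 2*i+1" "i < n" by blast
    thus "r k = (\<Sum>j\<in>{1..Suc n}. lam j * rg n x h j k)"
    proof cases
      case z thus ?thesis using r0 rg_zero by simp
    next
      case big thus ?thesis using rbig rg_big by simp
    next
      case top
      have "(\<Sum>j\<in>{1..Suc n}. lam j * rg n x h j k) = (\<Sum>j\<in>{1..Suc n}. (x - real n) * lam j - h * (lam j * ind (j \<le> n)))"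
      proof (intro sum.cong refl)
        fix j have eq: "rg n x h j k = (x - real n) - h * ind (j \<le> n)" using rg_top[of n x h j] top by simp
        show "lam j * rg n x h j k = (x - real n) * lam j - h * (lam j * ind (j \<le> n))"
          by (simp only: eq) (simp add: algebra_simps)
      qed
      also have "\<dots> = (x - real n) * 1 - h * ((real n - u n) / h)"
        using total filt[of n] by (simp add: sum_subtractf sum_distrib_left[symmetric])
      finally show ?thesis using top r2n1 h0 by simp
    next
      case ev
      have "(\<Sum>j\<in>{1..Suc n}. lam j * rg n x h j k) = (\<Sum>j\<in>{1..Suc n}. 2 * h * (lam j * ind (j \<le> i)))"
      proof (intro sum.cong refl)
        fix j have eq: "rg n x h j k = 2*h*ind (j \<le> i)" using rg_even[of i n x h j] ev by simp
        show "lam j * rg n x h j k = 2 * h * (lam j * ind (j \<le> i))"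
          by (simp only: eq) (simp add: algebra_simps)
      qed
      also have "\<dots> = 2 * h * ((real i - u i) / h)" using filt[of i] ev by (simp add: sum_distrib_left[symmetric])
      finally show ?thesis using ev r2i[of i] h0 by simp
    next
      case od
      have ro: "r (2*i+1) = u (Suc i) + u i - real (2*i)"
      proof -
        have "u (Suc i) = u i + r (2*i) + r (2*i+1)" unfolding u_def by simp
        moreover have "r (2*i) = real (2*i) - 2 * u i"
          using r2i[of i] od r0 u0 by (cases "i = 0") auto
        ultimately show ?thesis by simp
      qed
      have "(\<Sum>j\<in>{1..Suc n}. lam j * rg n x h j k) =
          (\<Sum>j\<in>{1..Suc n}. lam j - h * (lam j * ind (j \<le> Suc i)) - h * (lam j * ind (j \<le> i)))"
      proof (intro sum.cong refl)
        fix j have eq: "rg n x h j k = 1 - h * (ind (j \<le> Suc i) + ind (j \<le> i))" using rg_odd[of i n x h j] od by simp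
        show "lam j * rg n x h j k = lam j - h * (lam j * ind (j \<le> Suc i)) - h * (lam j * ind (j \<le> i))"
          by (simp only: eq) (simp add: algebra_simps)
      qed
      also have "\<dots> = 1 - h * ((real (Suc i) - u (Suc i)) / h) - h * ((real i - u i) / h)"
        using total filt[of i] filt[of "Suc i"] od by (simp add: sum_subtractf sum_distrib_left[symmetric])
      finally show ?thesis using od ro h0 by simp
    qed
  qed
  show ?thesis using L0 total L2 by blast
qed


lemma pmf_mix: assumes "0 \<le> l" "l \<le> 1" shows "pmf (mix l A B) k = l * pmf A k + (1 - l) * pmf B k"
proof -
  have "pmf (mix l A B) k = measure_pmf.expectation (bernoulli_pmf l) (\<lambda>b. pmf (if b then A else B) k)"
    unfolding mix_def pmf_bind ..
  also have "\<dots> = (\<Sum>b\<in>UNIV. pmf (if b then A else B) k * pmf (bernoulli_pmf l) b)"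
    by (rule integral_measure_pmf_real) auto
  also have "\<dots> = l * pmf A k + (1 - l) * pmf B k"
    using assms by (simp add: UNIV_bool pmf_bernoulli_True pmf_bernoulli_False algebra_simps)
  finally show ?thesis .
qed

lemma pmf_UO: assumes "1 \<le> n" shows "pmf (UO n) k = (if odd k \<and> k < 2*n then 1 / real n else 0)"
proof -
  let ?S = "(\<lambda>i. 2*i - 1) ` {1..n}"
  have inj: "inj_on (\<lambda>i::nat. 2*i-1) {1..n}" by (auto simp: inj_on_def)
  have card: "card ?S = n" using card_image[OF inj] by simp
  have ne: "?S \<noteq> {}" using assms by auto
  have mem: "k \<in> ?S \<longleftrightarrow> odd k \<and> k < 2*n"
  proof
    assume "k \<in> ?S" then obtain i where "i \<in> {1..n}" "k = 2*i - 1" by auto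
    thus "odd k \<and> k < 2*n" by (cases i) auto
  next
    assume a: "odd k \<and> k < 2*n"
    then obtain i where i: "k = 2*i+1" by (auto elim: oddE)
    hence "Suc i \<in> {1..n}" "k = 2 * Suc i - 1" using a by auto
    thus "k \<in> ?S" by blast
  qed
  show ?thesis unfolding UO_def using pmf_of_set[OF ne, of k] card mem by (simp add: indicator_def)
qed

lemma pmf_UE: "pmf (UE n) k = (if even k \<and> k \<le> 2*n then 1 / (real n + 1) else 0)"
proof -
  let ?S = "(\<lambda>i. 2*i) ` {0..n}"
  have inj: "inj_on (\<lambda>i::nat. 2*i) {0..n}" by (auto simp: inj_on_def)
  have card: "card ?S = n + 1" using card_image[OF inj] by simp
  have ne: "?S \<noteq> {}" by auto
  have mem: "k \<in> ?S \<longleftrightarrow> even k \<and> k \<le> 2*n"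
  proof
    assume "k \<in> ?S" thus "even k \<and> k \<le> 2*n" by auto
  next
    assume a: "even k \<and> k \<le> 2*n"
    then obtain i where i: "k = 2*i" by (auto elim: evenE)
    hence "i \<in> {0..n}" using a by auto
    thus "k \<in> ?S" using i by blast
  qed
  show ?thesis unfolding UE_def using pmf_of_set[OF ne, of k] card mem by (simp add: indicator_def)
qed

definition vv :: "nat \<Rightarrow> nat \<Rightarrow> nat \<Rightarrow> real" where
  "vv n j k = (if odd k \<and> (k+1) div 2 < j then 2 / (2 * real n + 1) else 0)
     + (if k = 2*j-1 then 1 / (2 * real n + 1) else 0)
     + (if even k \<and> j \<le> k div 2 \<and> k div 2 \<le> n then 2 / (2 * real n + 1) else 0)"

lemma pmf_V:
  assumes j: "1 \<le> j" "j \<le> n"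
  shows "pmf (V n j) k = vv n j k"
proof -
  define c2 where "c2 = 2 / (2 * real n + 1)"
  define c1 where "c1 = 1 / (2 * real n + 1)"
  define f where "f k = (\<Sum>i\<in>{1..<j}. if k = 2 * i - 1 then c2 else 0)
      + (if k = 2 * j - 1 then c1 else 0)
      + (\<Sum>i\<in>{j..n}. if k = 2 * i then c2 else 0)" for k
  have Vf: "V n j = embed_pmf f" unfolding V_def f_def c1_def c2_def ..
  have A: "(\<Sum>i\<in>{1..<j}. if k = 2 * i - 1 then c2 else 0) = (if odd k \<and> (k+1) div 2 < j then c2 else 0)" for k
  proof -
    have "(\<Sum>i\<in>{1..<j}. if k = 2 * i - 1 then c2 else 0) = (\<Sum>i\<in>{1..<j}. if i = (k+1) div 2 then (if odd k then c2 else 0) else 0)"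
      by (intro sum.cong refl) (auto elim!: oddE)
    also have "\<dots> = (if (k+1) div 2 \<in> {1..<j} then (if odd k then c2 else 0) else 0)"
      by (simp add: sum.delta)
    also have "\<dots> = (if odd k \<and> (k+1) div 2 < j then c2 else 0)" by (auto elim!: oddE)
    finally show ?thesis .
  qed
  have C: "(\<Sum>i\<in>{j..n}. if k = 2 * i then c2 else 0) = (if even k \<and> j \<le> k div 2 \<and> k div 2 \<le> n then c2 else 0)" for k
  proof -
    have "(\<Sum>i\<in>{j..n}. if k = 2 * i then c2 else 0) = (\<Sum>i\<in>{j..n}. if i = k div 2 then (if even k then c2 else 0) else 0)"
      by (intro sum.cong refl) auto
    also have "\<dots> = (if k div 2 \<in> {j..n} then (if even k then c2 else 0) else 0)"
      by (simp add: sum.delta)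
    also have "\<dots> = (if even k \<and> j \<le> k div 2 \<and> k div 2 \<le> n then c2 else 0)" by auto
    finally show ?thesis .
  qed
  have fv: "f k = vv n j k" for k unfolding f_def A C unfolding vv_def c1_def c2_def ..
  have fnn: "0 \<le> f k" for k unfolding f_def c1_def c2_def by (auto intro!: sum_nonneg add_nonneg_nonneg)
  have fz: "f k = 0" if kn: "k \<notin> {..2*n}" for k
  proof -
    have a: "2*n < k" using kn by simp
    have "\<not> (odd k \<and> (k+1) div 2 < j)" using a j by presburger
    moreover have "k \<noteq> 2*j-1" using a j by simp
    moreover have "\<not> (even k \<and> j \<le> k div 2 \<and> k div 2 \<le> n)" using a by presburger
    ultimately show ?thesis unfolding fv vv_def by simp
  qed
  have sumA: "(\<Sum>k\<in>{..2*n}. (\<Sum>i\<in>{1..<j}. if k = 2 * i - 1 then c2 else 0)) = real (j - 1) * c2"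
  proof -
    have "(\<Sum>k\<in>{..2*n}. (\<Sum>i\<in>{1..<j}. if k = 2 * i - 1 then c2 else 0))
        = (\<Sum>i\<in>{1..<j}. (\<Sum>k\<in>{..2*n}. if k = 2 * i - 1 then c2 else 0))" by (rule sum.swap)
    also have "\<dots> = (\<Sum>i\<in>{1..<j}. c2)"
      by (intro sum.cong refl) (use j in \<open>auto simp: sum.delta\<close>)
    finally show ?thesis by simp
  qed
  have sumB: "(\<Sum>k\<in>{..2*n}. if k = 2 * j - 1 then c1 else 0) = c1" using j by (simp add: sum.delta)
  have sumC: "(\<Sum>k\<in>{..2*n}. (\<Sum>i\<in>{j..n}. if k = 2 * i then c2 else 0)) = real (n + 1 - j) * c2"
  proof -
    have "(\<Sum>k\<in>{..2*n}. (\<Sum>i\<in>{j..n}. if k = 2 * i then c2 else 0))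
        = (\<Sum>i\<in>{j..n}. (\<Sum>k\<in>{..2*n}. if k = 2 * i then c2 else 0))" by (rule sum.swap)
    also have "\<dots> = (\<Sum>i\<in>{j..n}. c2)" by (intro sum.cong refl) (auto simp: sum.delta)
    finally show ?thesis by simp
  qed
  have tot: "(\<Sum>k\<in>{..2*n}. f k) = 1"
  proof -
    have "(\<Sum>k\<in>{..2*n}. f k) = real (j - 1) * c2 + c1 + real (n + 1 - j) * c2"
      unfolding f_def sum.distrib sumA sumB sumC ..
    also have "\<dots> = (real (j - 1) + real (n + 1 - j)) * c2 + c1" by (simp add: algebra_simps)
    also have "real (j - 1) + real (n + 1 - j) = real n" using j by (simp add: of_nat_diff)
    also have "real n * c2 + c1 = 1"
    proof -
      have pos: "0 < 2 * real n + 1" by linarith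
      show ?thesis unfolding c1_def c2_def using pos by (simp add: field_simps)
    qed
    finally show ?thesis .
  qed
  have int: "(\<integral>\<^sup>+ k. ennreal (f k) \<partial>count_space UNIV) = 1"
  proof -
    have "(\<integral>\<^sup>+ k. ennreal (f k) \<partial>count_space UNIV) = (\<Sum>k\<in>{..2*n}. ennreal (f k))"
      by (rule nn_integral_count_space') (use fz in auto)
    also have "\<dots> = ennreal (\<Sum>k\<in>{..2*n}. f k)" by (rule sum_ennreal) (use fnn in auto)
    finally show ?thesis using tot by simp
  qed
  show ?thesis unfolding Vf pmf_embed_pmf[OF fnn int] fv ..
qed


lemma kcases:
  fixes k n :: nat
  obtains "k = 0" | "2*n+1 < k" | "k = 2*n+1" | i where "k = 2*i" "1 \<le> i" "i \<le> n"
    | i where "k = 2*i+1" "i < n"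
proof -
  have "k = 0 \<or> 2*n+1 < k \<or> k = 2*n+1 \<or> (\<exists>i. k = 2*i \<and> 1 \<le> i \<and> i \<le> n) \<or> (\<exists>i. k = 2*i+1 \<and> i < n)"
  proof (cases "even k")
    case True
    then obtain i where "k = 2*i" by (auto elim: evenE)
    thus ?thesis by (cases "i = 0"; cases "i \<le> n") auto
  next
    case False
    then obtain i where "k = 2*i+1" by (auto elim: oddE)
    thus ?thesis by (cases "i < n"; cases "i = n") auto
  qed
  thus ?thesis using that by blast
qed

lemma frac_cancel: "p \<noteq> (0::real) \<Longrightarrow> x \<noteq> 0 \<Longrightarrow> (p * h / x) * (c / p) = c * h / x"
  by (simp add: field_simps)

lemma gen_pmf_V:
  assumes n1: "1 \<le> n" and j: "1 \<le> j" "j \<le> n" and x: "0 < x" and h: "0 < h" "h \<le> 1/2"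
    and cs: "(h = x - real n \<and> n' = n) \<or> (h = real n + 1 - x \<and> n' = n + 1)"
  shows "pmf (mix ((2 * real n + 1) * h / x) (V n j) (UO n')) k = rg n x h j k / x"
proof -
  define l where "l = (2 * real n + 1) * h / x"
  have pos: "0 < 2 * real n + 1" by linarith
  have l0: "0 \<le> l" unfolding l_def using h x by simp
  have l1: "l \<le> 1"
  proof -
    have a: "(2*h) * real n \<le> 1 * real n" using h by (intro mult_right_mono) auto
    have b: "(2*h) * (real n + 1) \<le> 1 * (real n + 1)" using h by (intro mult_right_mono) auto
    have "(2 * real n + 1) * h \<le> x"
      using cs
    proof
      assume "h = x - real n \<and> n' = n" thus ?thesis using a by (simp add: algebra_simps)
    next
      assume "h = real n + 1 - x \<and> n' = n + 1" thus ?thesis using b by (simp add: algebra_simps)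
    qed
    thus ?thesis unfolding l_def using x by simp
  qed
  have n'1: "1 \<le> n'" using cs n1 by auto
  have key: "(1 - l) / real n' = (1 - 2*h) / x"
  proof -
    have e: "real n' * (1 - 2*h) = x - (2 * real n + 1) * h" using cs by (auto simp: algebra_simps)
    have "1 - l = (x - (2 * real n + 1) * h) / x" unfolding l_def using x by (simp add: field_simps)
    also have "\<dots> = real n' * (1 - 2*h) / x" using e by simp
    finally have "1 - l = real n' * (1 - 2*h) / x" .
    thus ?thesis using n'1 by simp
  qed
  have xne: "x \<noteq> 0" and pne: "2 * real n + 1 \<noteq> 0" using pos x by auto
  have l2: "l * (2 / (2 * real n + 1)) = 2 * h / x" unfolding l_def using frac_cancel[OF pne xne, of h 2] .
  have l3: "l * (1 / (2 * real n + 1)) = h / x" unfolding l_def using frac_cancel[OF pne xne, of h 1] by simp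
  have pm: "pmf (mix l (V n j) (UO n')) k = l * vv n j k + (1 - l) * (if odd k \<and> k < 2*n' then 1 / real n' else 0)"
    using pmf_mix[OF l0 l1, of "V n j" "UO n'" k] unfolding pmf_V[OF j] pmf_UO[OF n'1] .
  have "l * vv n j k + (1 - l) * (if odd k \<and> k < 2*n' then 1 / real n' else 0) = rg n x h j k / x"
  proof (cases rule: kcases[where k=k and n=n])
    case 1 thus ?thesis using j by (simp add: vv_def rg_def)
  next
    case 2
    have "vv n j k = 0" unfolding vv_def using 2 j by (auto; presburger)
    moreover have "(if odd k \<and> k < 2*n' then 1 / real n' else 0) = 0" using 2 cs by auto
    ultimately show ?thesis using rg_big[OF 2] by simp
  next
    case 3
    have "vv n j k = 0" unfolding vv_def using 3 j by auto
    moreover have "rg n x h j k = (x - real n) - h" using rg_top[of n x h j] 3 j by (simp add: ind_def)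
    ultimately show ?thesis
    proof (cases "n' = n")
      case True
      hence "h = x - real n" using cs by auto
      thus ?thesis using \<open>vv n j k = 0\<close> \<open>rg n x h j k = _\<close> 3 True by simp
    next
      case False
      hence hc: "h = real n + 1 - x" "n' = n + 1" using cs by auto
      have kk: "(1 - l) * (1 / real n') = (1 - 2*h) / x" using key by simp
      have uo: "(if odd k \<and> k < 2*n' then 1 / real n' else 0) = 1 / real n'" using 3 hc by auto
      have rgv: "rg n x h j k = 1 - 2*h" using \<open>rg n x h j k = _\<close> hc by simp
      show ?thesis unfolding uo rgv \<open>vv n j k = 0\<close> using kk by simp
    qed
  next
    case (4 i)
    have "k \<noteq> 2*j-1" using 4 j by presburger
    hence "vv n j k = (if j \<le> i then 2 / (2 * real n + 1) else 0)" unfolding vv_def using 4 j by auto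
    moreover have "rg n x h j k = 2*h*ind (j \<le> i)" using rg_even[of i n x h j] 4 by simp
    ultimately show ?thesis using 4 l2 by (auto simp: ind_def)
  next
    case (5 i)
    have uo: "(if odd k \<and> k < 2*n' then 1 / real n' else 0) = 1 / real n'" using 5 cs by auto
    have rgv: "rg n x h j k = 1 - h * (ind (j \<le> Suc i) + ind (j \<le> i))" using rg_odd[of i n x h j] 5 by simp
    have k1: "(1 - l) * (1 / real n') = (1 - 2*h) / x" using key by simp
    consider "Suc i < j" | "Suc i = j" | "j \<le> i" by linarith
    thus ?thesis
    proof cases
      case 1
      hence "vv n j k = 2 / (2 * real n + 1)" unfolding vv_def using 5 j by auto
      hence "l * vv n j k + (1 - l) * (1 / real n') = 2 * h / x + (1 - 2*h) / x" using l2 k1 by simp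
      also have "\<dots> = 1 / x" by (simp add: add_divide_distrib[symmetric])
      finally show ?thesis unfolding uo rgv using 1 by (simp add: ind_def)
    next
      case 2
      hence "vv n j k = 1 / (2 * real n + 1)" unfolding vv_def using 5 j by auto
      hence "l * vv n j k + (1 - l) * (1 / real n') = h / x + (1 - 2*h) / x" using l3 k1 by simp
      also have "\<dots> = (1 - h) / x" by (simp add: add_divide_distrib[symmetric])
      finally show ?thesis unfolding uo rgv using 2 by (simp add: ind_def)
    next
      case 3
      hence "vv n j k = 0" unfolding vv_def using 5 j by auto
      hence "l * vv n j k + (1 - l) * (1 / real n') = (1 - 2*h) / x" using k1 by simp
      thus ?thesis unfolding uo rgv using 3 by (simp add: ind_def)
    qed
  qed
  thus ?thesis using pm unfolding l_def by simp
qed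

lemma gen_pmf_T:
  assumes n1: "1 \<le> n" and x: "real n < x" "x < real n + 1"
  shows "pmf (mix ((real n + 1) * (x - real n) / x) (UO (n+1)) (UO n)) k = rg n x h (n+1) k / x"
proof -
  define l where "l = (real n + 1) * (x - real n) / x"
  have x0: "0 < x" using x n1 by linarith
  have l0: "0 \<le> l" unfolding l_def using x x0 by simp
  have l1: "l \<le> 1"
  proof -
    have "(real n + 1) * (x - real n) \<le> x"
    proof -
      have "real n * x \<le> real n * (real n + 1)" using x by (simp add: mult_left_mono)
      thus ?thesis by (simp add: algebra_simps)
    qed
    thus ?thesis unfolding l_def using x0 by simp
  qed
  have np: "real n + 1 \<noteq> 0" by linarith
  have k1: "l * (1 / (real n + 1)) = (x - real n) / x" unfolding l_def using x0 np by simp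
  have om: "1 - l = real n * (real n + 1 - x) / x" unfolding l_def using x0 by (simp add: field_simps)
  have k2: "(1 - l) * (1 / real n) = (real n + 1 - x) / x" unfolding om using n1 by simp
  have u1: "pmf (UO (n+1)) k = (if odd k \<and> k < 2*(n+1) then 1 / real (n+1) else 0)"
    using pmf_UO[of "n+1" k] by simp
  have u2: "pmf (UO n) k = (if odd k \<and> k < 2*n then 1 / real n else 0)" using pmf_UO[OF n1] .
  have pm: "pmf (mix l (UO (n+1)) (UO n)) k = l * (if odd k \<and> k < 2*(n+1) then 1 / real (n+1) else 0)
      + (1 - l) * (if odd k \<and> k < 2*n then 1 / real n else 0)"
    using pmf_mix[OF l0 l1, of "UO (n+1)" "UO n" k] unfolding u1 u2 .
  have "l * (if odd k \<and> k < 2*(n+1) then 1 / real (n+1) else 0)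
      + (1 - l) * (if odd k \<and> k < 2*n then 1 / real n else 0) = rg n x h (n+1) k / x"
  proof (cases rule: kcases[where k=k and n=n])
    case 1 thus ?thesis by (simp add: rg_def)
  next
    case 2 thus ?thesis using rg_big[OF 2] by auto
  next
    case 3
    have "rg n x h (n+1) k = x - real n" using rg_top[of n x h "n+1"] 3 by (simp add: ind_def)
    thus ?thesis using 3 k1 by (simp add: ac_simps)
  next
    case (4 i)
    thus ?thesis using rg_even[of i n x h "n+1"] by (simp add: ind_def)
  next
    case (5 i)
    have "rg n x h (n+1) k = 1" using rg_odd[of i n x h "n+1"] 5 by (simp add: ind_def)
    moreover have "l * (1 / (real n + 1)) + (1 - l) * (1 / real n) = 1 / x"
      using k1 k2 by (simp add: add_divide_distrib[symmetric])
    ultimately show ?thesis using 5 by (simp add: ac_simps)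
  qed
  thus ?thesis using pm unfolding l_def by simp
qed

lemma conv_intro:
  fixes G :: "nat \<Rightarrow> 'a pmf" and w :: "nat \<Rightarrow> real"
  assumes J: "finite J" and w0: "\<And>j. j \<in> J \<Longrightarrow> 0 \<le> w j" and w1: "(\<Sum>j\<in>J. w j) = 1"
    and GS: "\<And>j. j \<in> J \<Longrightarrow> G j \<in> S"
    and X: "\<And>k. pmf X k = (\<Sum>j\<in>J. w j * pmf (G j) k)"
  shows "X \<in> conv_pmf S"
proof -
  define f where "f j = (if j \<in> J then w j else 0)" for j
  have fnn: "0 \<le> f j" for j unfolding f_def using w0 by auto
  have int: "(\<integral>\<^sup>+ j. ennreal (f j) \<partial>count_space UNIV) = 1"
  proof -
    have "(\<integral>\<^sup>+ j. ennreal (f j) \<partial>count_space UNIV) = (\<Sum>j\<in>J. ennreal (f j))"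
      by (rule nn_integral_count_space') (use J in \<open>auto simp: f_def\<close>)
    also have "\<dots> = ennreal (\<Sum>j\<in>J. f j)" by (rule sum_ennreal) (use fnn in auto)
    also have "(\<Sum>j\<in>J. f j) = 1" using w1 unfolding f_def by simp
    finally show ?thesis by simp
  qed
  define W where "W = embed_pmf f"
  have pW: "pmf W j = f j" for j unfolding W_def using pmf_embed_pmf[OF fnn int] by simp
  have sW: "set_pmf W \<subseteq> J" unfolding W_def set_embed_pmf[OF fnn int] f_def by auto
  define Q where "Q = map_pmf G W"
  have finQ: "finite (set_pmf Q)" unfolding Q_def using finite_subset[OF sW J] by simp
  have sQ: "set_pmf Q \<subseteq> S" unfolding Q_def using sW GS by auto
  have "X = join_pmf Q"
  proof (rule pmf_eqI)
    fix k
    have "pmf (join_pmf Q) k = measure_pmf.expectation W (\<lambda>j. pmf (G j) k)"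
      unfolding pmf_join Q_def integral_map_pmf ..
    also have "\<dots> = (\<Sum>j\<in>J. pmf (G j) k * pmf W j)"
      by (rule integral_measure_pmf_real) (use J sW in auto)
    also have "\<dots> = (\<Sum>j\<in>J. w j * pmf (G j) k)" by (intro sum.cong refl) (simp add: pW f_def)
    finally show "pmf X k = pmf (join_pmf Q) k" using X by simp
  qed
  thus ?thesis unfolding conv_pmf_def using finQ sQ by blast
qed


lemma u1_scaled: "u1 c X k = 2 * (\<Sum>i<k. c/2 * pmf X i) + c/2 * pmf X k - real k"
  unfolding u1_def by (simp add: sum_distrib_left)

lemma u1_join:
  assumes fin: "finite (set_pmf Q)"
  shows "u1 v (join_pmf Q) k = measure_pmf.expectation Q (\<lambda>G. u1 v G k)"
proof -
  let ?A = "set_pmf Q"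
  have E: "measure_pmf.expectation Q f = (\<Sum>G\<in>?A. f G * pmf Q G)" for f :: "nat pmf \<Rightarrow> real"
    by (rule integral_measure_pmf_real[OF fin]) auto
  have one: "(\<Sum>G\<in>?A. pmf Q G) = 1" by (rule sum_pmf_eq_1[OF fin]) simp
  have pj: "pmf (join_pmf Q) i = (\<Sum>G\<in>?A. pmf G i * pmf Q G)" for i unfolding pmf_join E ..
  have "u1 v (join_pmf Q) k = v * (\<Sum>i<k. \<Sum>G\<in>?A. pmf G i * pmf Q G)
      + v / 2 * (\<Sum>G\<in>?A. pmf G k * pmf Q G) - real k * (\<Sum>G\<in>?A. pmf Q G)"
    unfolding u1_def pj one by simp
  also have "\<dots> = (\<Sum>G\<in>?A. u1 v G k * pmf Q G)"
    unfolding u1_def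
    by (simp add: sum.swap[of _ "{..<k}"] sum_distrib_left sum_distrib_right sum_subtractf sum.distrib algebra_simps)
  finally show ?thesis unfolding E .
qed

lemma conv_props:
  assumes X: "X \<in> conv_pmf S"
  shows "(\<And>G. G \<in> S \<Longrightarrow> u1 v G k \<le> c) \<Longrightarrow> u1 v X k \<le> c"
    and "(\<And>G. G \<in> S \<Longrightarrow> u1 v G k = c) \<Longrightarrow> u1 v X k = c"
    and "set_pmf X \<subseteq> \<Union> (set_pmf ` S)"
proof -
  obtain Q where Q: "X = join_pmf Q" "finite (set_pmf Q)" "set_pmf Q \<subseteq> S"
    using X unfolding conv_pmf_def by blast
  show "(\<And>G. G \<in> S \<Longrightarrow> u1 v G k \<le> c) \<Longrightarrow> u1 v X k \<le> c"
  proof -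
    assume a: "\<And>G. G \<in> S \<Longrightarrow> u1 v G k \<le> c"
    have "measure_pmf.expectation Q (\<lambda>G. u1 v G k) \<le> c"
      by (rule measure_pmf.integral_le_const) (use Q a in \<open>auto simp: AE_measure_pmf_iff intro: integrable_measure_pmf_finite\<close>)
    thus ?thesis using u1_join[OF Q(2)] Q(1) by simp
  qed
  show "(\<And>G. G \<in> S \<Longrightarrow> u1 v G k = c) \<Longrightarrow> u1 v X k = c"
  proof -
    assume a: "\<And>G. G \<in> S \<Longrightarrow> u1 v G k = c"
    have "measure_pmf.expectation Q (\<lambda>G. u1 v G k) = measure_pmf.expectation Q (\<lambda>G. c)"
      by (intro integral_cong_AE) (use Q a in \<open>auto simp: AE_measure_pmf_iff\<close>)
    thus ?thesis using u1_join[OF Q(2)] Q(1) by simp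
  qed
  show "set_pmf X \<subseteq> \<Union> (set_pmf ` S)" using Q by (auto simp: set_pmf_join_pmf)
qed

lemma Yprof:
  fixes s :: "nat \<Rightarrow> real" and y :: real and m :: nat
  assumes sd: "\<And>k. s k = (if k = 0 then y - real m else if even k \<and> k \<le> 2*m then 1 else 0)"
    and ym: "real m + 1 < y"
  shows "2 * (\<Sum>i<k. s i) + s k - real k \<le> 2*y - 2*real m - 1"
    and "1 \<le> k \<Longrightarrow> k \<le> 2*m+1 \<Longrightarrow> 2 * (\<Sum>i<k. s i) + s k - real k = 2*y - 2*real m - 1"
proof -
  have pre: "i \<le> m \<Longrightarrow> (\<Sum>k<2*i+1. s k) = y - real m + real i" for i
  proof (induction i)
    case 0 thus ?case using sd[of 0] by simp
  next
    case (Suc i)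
    have e: "2 * Suc i + 1 = Suc (Suc (2*i+1))" by simp
    have "s (2*i+1) = 0" "s (Suc (2*i+1)) = 1" using sd Suc.prems by auto
    thus ?case using Suc unfolding e by simp
  qed
  have val: "2 * (\<Sum>i<k. s i) + s k - real k = 2*y - 2*real m - 1" if k: "1 \<le> k" "k \<le> 2*m+1" for k
  proof (cases "even k")
    case True
    then obtain i where i: "k = 2*i" by (auto elim: evenE)
    then obtain i0 where i0: "i = Suc i0" using k by (cases i) auto
    have k2m: "k \<le> 2*m" using k True by presburger
    have "(\<Sum>l<k. s l) = (\<Sum>l<2*i0+1. s l) + s (2*i0+1)" using i i0 by simp
    also have "\<dots> = y - real m + real i0" using pre[of i0] sd[of "2*i0+1"] i i0 k by simp
    finally show ?thesis using sd[of k] i i0 k True k2m by simp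
  next
    case False
    then obtain i where i: "k = 2*i+1" by (auto elim: oddE)
    thus ?thesis using pre[of i] sd[of k] k by simp
  qed
  thus "1 \<le> k \<Longrightarrow> k \<le> 2*m+1 \<Longrightarrow> 2 * (\<Sum>i<k. s i) + s k - real k = 2*y - 2*real m - 1" by blast
  show "2 * (\<Sum>i<k. s i) + s k - real k \<le> 2*y - 2*real m - 1"
  proof (cases "k = 0")
    case True thus ?thesis using sd[of 0] ym by simp
  next
    case False
    show ?thesis
    proof (cases "k \<le> 2*m+1")
      case True thus ?thesis using val False by simp
    next
      case big: False
      have "(\<Sum>i<k. s i) = (\<Sum>i<2*m+1. s i) + (\<Sum>i\<in>{2*m+1..<k}. s i)"
        using big by (metis atLeast0LessThan le_less_linear less_imp_le sum.atLeastLessThan_concat zero_le)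
      also have "(\<Sum>i\<in>{2*m+1..<k}. s i) = 0" using sd by (auto intro!: sum.neutral)
      finally have "(\<Sum>i<k. s i) = y" using pre[of m] by simp
      thus ?thesis using sd[of k] big by simp
    qed
  qed
qed


lemma pmf_in_set: "0 < pmf M k \<Longrightarrow> k \<in> set_pmf M" by (simp add: set_pmf_iff)

lemma fwd_core:
  fixes v1 v2 :: real and m :: nat and b \<alpha> :: real and X Y :: "nat pmf"
  assumes v: "v2 \<le> v1" "0 < v2" and m1: "1 \<le> m" and b: "0 < b" "b < real m"
    and al: "0 < \<alpha>" "\<alpha> < 1" and sX: "strategy X" and sY: "strategy Y"
    and mX: "mean X = real m + \<alpha>" and mY: "mean Y = b" and NE: "nash v1 v2 X Y"
  shows "real m < v2/2 \<and> v2/2 < real m + 1 \<and> real m + 1 < v1/2 \<and> (v1/2) * b = real m * (real m + 1)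
    \<and> (v2/2) * \<alpha> = (real m + 1) * (v2/2 - real m)
    \<and> (\<forall>k. (v1/2) * pmf Y k = (if k = 0 then v1/2 - real m else if even k \<and> k \<le> 2*m then 1 else 0))
    \<and> payoff1 v1 X Y = v1 - 2 * real m - 1 \<and> payoff2 v2 Y X = 0
    \<and> (\<forall>k. Dg (\<lambda>k. v2/2 * pmf X k) k \<le> 0) \<and> (\<forall>i\<le>m. Dg (\<lambda>k. v2/2 * pmf X k) (2*i) = 0)
    \<and> pmf X 0 = 0 \<and> (\<forall>k. 2*m+1 < k \<longrightarrow> pmf X k = 0)"
proof -
  define p1 where "p1 = payoff1 v1 X Y"
  define p2 where "p2 = payoff2 v2 Y X"
  have le1: "\<And>k. u1 v1 Y k \<le> p1" and eq1: "\<And>k. k \<in> set_pmf X \<Longrightarrow> u1 v1 Y k = p1"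
    and le2: "\<And>k. u1 v2 X k \<le> p2" and eq2: "\<And>k. k \<in> set_pmf Y \<Longrightarrow> u1 v2 X k = p2"
    using nash_pointwise[OF NE] unfolding p1_def p2_def by auto
  have v10: "0 < v1" using v by simp
  have ubound: "u1 c M k \<le> c - real k" if "0 < c" for c M k
  proof -
    have "(\<Sum>i<Suc k. pmf M i) \<le> 1" by (rule sum_pmf_le1) simp
    hence "(\<Sum>i<k. pmf M i) + pmf M k \<le> 1" by simp
    hence "c * ((\<Sum>i<k. pmf M i) + pmf M k) \<le> c * 1" using that by (intro mult_left_mono) auto
    moreover have "c / 2 * pmf M k \<le> c * pmf M k" using that by (simp add: mult_right_mono)
    ultimately show ?thesis unfolding u1_def by (simp add: algebra_simps)
  qed
  have u0: "0 \<le> u1 c M 0" if "0 < c" for c M unfolding u1_def using that by simp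
  have Xb: "real k \<le> v1" if "k \<in> set_pmf X" for k
    using eq1[OF that] le1[of 0] u0[OF v10, of Y] ubound[OF v10, of Y k] by simp
  have Yb: "real k \<le> v1" if "k \<in> set_pmf Y" for k
    using eq2[OF that] le2[of 0] u0[OF v(2), of X] ubound[OF v(2), of X k] v by simp
  define N where "N = nat \<lfloor>v1\<rfloor> + 1"
  have kN: "k < N" if "real k \<le> v1" for k
  proof -
    have "int k \<le> \<lfloor>v1\<rfloor>" using that by (simp add: le_floor_iff)
    thus ?thesis unfolding N_def by linarith
  qed
  have pX0: "pmf X k = 0" if "N \<le> k" for k
  proof (rule ccontr)
    assume "pmf X k \<noteq> 0" hence "k \<in> set_pmf X" by (simp add: set_pmf_iff)
    thus False using kN[OF Xb] that by force
  qed
  have pY0: "pmf Y k = 0" if "N \<le> k" for k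
  proof (rule ccontr)
    assume "pmf Y k \<noteq> 0" hence "k \<in> set_pmf Y" by (simp add: set_pmf_iff)
    thus False using kN[OF Yb] that by force
  qed
  have sXN: "set_pmf X \<subseteq> {..<N}" using kN Xb by auto
  have sYN: "set_pmf Y \<subseteq> {..<N}" using kN Yb by auto
  define r where "r k = v2/2 * pmf X k" for k
  define s where "s k = v1/2 * pmf Y k" for k
  have uX: "u1 v2 X k = 2*(\<Sum>i<k. r i) + r k - real k" for k unfolding r_def by (rule u1_scaled)
  have uY: "u1 v1 Y k = 2*(\<Sum>i<k. s i) + s k - real k" for k unfolding s_def by (rule u1_scaled)
  interpret S0: sys0 r s p1 p2 N
  proof
    show "\<And>k. 0 \<le> r k" unfolding r_def using v by simp
    show "\<And>k. 0 \<le> s k" unfolding s_def using v10 by simp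
    show "\<And>k. N \<le> k \<Longrightarrow> r k = 0" unfolding r_def using pX0 by simp
    show "\<And>k. N \<le> k \<Longrightarrow> s k = 0" unfolding s_def using pY0 by simp
    show "\<And>k. 2*(\<Sum>i<k. r i) + r k - real k - p2 \<le> 0" using le2 uX by simp
    show "\<And>k. 2*(\<Sum>i<k. s i) + s k - real k - p1 \<le> 0" using le1 uY by simp
    show "\<And>k. 0 < s k \<Longrightarrow> 2*(\<Sum>i<k. r i) + r k - real k - p2 = 0"
    proof -
      fix k assume "0 < s k" hence "0 < pmf Y k" unfolding s_def using v10 by (simp add: zero_less_mult_iff)
      thus "2*(\<Sum>i<k. r i) + r k - real k - p2 = 0" using eq2[OF pmf_in_set] uX by simp
    qed
    show "\<And>k. 0 < r k \<Longrightarrow> 2*(\<Sum>i<k. s i) + s k - real k - p1 = 0"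
    proof -
      fix k assume "0 < r k" hence "0 < pmf X k" unfolding r_def using v by (simp add: zero_less_mult_iff)
      thus "2*(\<Sum>i<k. s i) + s k - real k - p1 = 0" using eq1[OF pmf_in_set] uY by simp
    qed
  qed
  have sumX: "(\<Sum>k<N. pmf X k) = 1" using sum_pmf_eq_1[OF _ sXN] by simp
  have sumY: "(\<Sum>k<N. pmf Y k) = 1" using sum_pmf_eq_1[OF _ sYN] by simp
  have "(\<Sum>k<N. r k) = v2/2 * (\<Sum>k<N. pmf X k)" unfolding r_def by (rule sum_distrib_left[symmetric])
  hence xv: "(\<Sum>k<N. r k) = v2/2" using sumX by simp
  have "(\<Sum>k<N. s k) = v1/2 * (\<Sum>k<N. pmf Y k)" unfolding s_def by (rule sum_distrib_left[symmetric])
  hence yv: "(\<Sum>k<N. s k) = v1/2" using sumY by simp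
  have meanX: "mean X = (\<Sum>k<N. real k * pmf X k)"
    unfolding mean_def by (rule integral_measure_pmf_real) (use sXN in auto)
  have meanY: "mean Y = (\<Sum>k<N. real k * pmf Y k)"
    unfolding mean_def by (rule integral_measure_pmf_real) (use sYN in auto)
  have MX: "(\<Sum>k<N. real k * r k) = v2/2 * (real m + \<alpha>)"
    using meanX mX unfolding r_def by (simp add: sum_distrib_left algebra_simps)
  have MY: "(\<Sum>k<N. real k * s k) = v1/2 * b"
    using meanY mY unfolding s_def by (simp add: sum_distrib_left algebra_simps)
  have p1pos: "0 < p1"
    by (rule S0.p1_pos[OF xv[symmetric] yv[symmetric] _ _ MX _ MY b(2)]) (use v al in auto)
  have "\<exists>k. 0 < s k"
  proof (rule ccontr)
    assume "\<not> ?thesis" hence "\<And>k. s k \<le> 0" by (simp add: not_less)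
    hence "(\<Sum>k<N. s k) \<le> 0" by (simp add: sum_nonpos)
    thus False using yv v10 by simp
  qed
  hence s0: "0 < s 0" using S0.s0_pos_of p1pos by blast
  interpret S: sys r s p1 p2 N by unfold_locales (rule s0)
  have F: "r 0 = 0 \<and> s 0 = v1/2 - real m \<and> (\<forall>k. 0 < k \<longrightarrow> s k = (if even k \<and> k \<le> 2*m then 1 else 0))
     \<and> real m < v2/2 \<and> v2/2 < real m + 1 \<and> p2 = 0 \<and> p1 = 2*(v1/2) - 2*real m - 1
     \<and> (\<forall>k. 2*m + 1 < k \<longrightarrow> r k = 0) \<and> (v1/2) * b = real m*(real m+1) \<and> (v2/2) * \<alpha> = (real m+1)*(v2/2 - real m)"
    using S.final[OF xv[symmetric] yv[symmetric] _ MX al m1 MY b] v by (simp add: algebra_simps)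
  have ym: "real m + 1 < v1/2"
  proof -
    have "(v1/2) * b < (v1/2) * real m" using b v10 by simp
    hence "real m * (real m + 1) < (v1/2) * real m" using F by simp
    hence "real m * (real m + 1) < real m * (v1/2)" by (simp add: mult.commute)
    thus ?thesis using m1 by simp
  qed
  have Yf: "\<forall>k. (v1/2) * pmf Y k = (if k = 0 then v1/2 - real m else if even k \<and> k \<le> 2*m then 1 else 0)"
    using F unfolding s_def by (metis neq0_conv)
  have DgD: "Dg r k = S0.D k" for k unfolding Dg_def S0.D_def using F by simp
  have Dg1: "\<forall>k. Dg r k \<le> 0" using DgD S0.Dle by simp
  have Dg2: "\<forall>i\<le>m. Dg r (2*i) = 0"
  proof (intro allI impI)
    fix i assume "i \<le> m"
    have "0 < s (2*i)" using F ym \<open>i \<le> m\<close> by (cases "i = 0") auto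
    thus "Dg r (2*i) = 0" using DgD S0.Deq by simp
  qed
  have rr: "(\<lambda>k. v2/2 * pmf X k) = r" unfolding r_def ..
  show ?thesis using F ym Yf Dg1 Dg2 v unfolding rr p1_def[symmetric] p2_def[symmetric]
    by (simp add: r_def)
qed


definition Gf :: "nat \<Rightarrow> real \<Rightarrow> real \<Rightarrow> bool \<Rightarrow> real \<Rightarrow> nat \<Rightarrow> nat pmf" where
  "Gf m x h cond \<alpha> j = (if j \<le> m then mix ((2 * real m + 1) * h / x) (V m j) (UO (if cond then m else m + 1))
     else mix \<alpha> (UO (m + 1)) (UO m))"

lemma gens:
  fixes x \<alpha> \<delta> \<sigma> :: real and m :: nat and cond :: bool
  assumes m1: "1 \<le> m" and x: "real m < x" "x < real m + 1"
    and al: "\<alpha> = (real m + 1) * (x - real m) / x"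
    and dl: "\<delta> = (2 * real m + 1) / (real m + 1)" and sg: "\<sigma> = (2 * real m + 1) / real m"
    and cd: "cond \<longleftrightarrow> x \<le> real m + 1/2"
  defines "h \<equiv> (if cond then x - real m else real m + 1 - x)"
  shows "insert (mix \<alpha> (UO (m + 1)) (UO m)) (if cond then {mix (\<alpha> * \<delta>) (V m j) (UO m) | j. 1 \<le> j \<and> j \<le> m}
            else {mix ((1 - \<alpha>) * \<sigma>) (V m j) (UO (m + 1)) | j. 1 \<le> j \<and> j \<le> m})
         = Gf m x h cond \<alpha> ` {1..Suc m}"
    and "\<And>j k. j \<in> {1..Suc m} \<Longrightarrow> pmf (Gf m x h cond \<alpha> j) k = rg m x h j k / x"
    and "0 < h" "h \<le> 1/2" "h \<le> real m + 1 - x"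
proof -
  have x0: "0 < x" using x by linarith
  show h0: "0 < h" unfolding h_def using x by auto
  show hh: "h \<le> 1/2" unfolding h_def using cd x by auto
  show "h \<le> real m + 1 - x" unfolding h_def using cd by auto
  have coef: "(if cond then \<alpha> * \<delta> else (1 - \<alpha>) * \<sigma>) = (2 * real m + 1) * h / x"
  proof (cases cond)
    case True
    have p: "real m + 1 \<noteq> 0" by linarith
    have "\<alpha> * \<delta> = (2 * real m + 1) * (x - real m) / x"
      unfolding al dl using frac_cancel[OF p, of x "x - real m" "2 * real m + 1"] x0 by simp
    thus ?thesis using True unfolding h_def by simp
  next
    case False
    have om: "1 - \<alpha> = real m * (real m + 1 - x) / x" unfolding al using x0 by (simp add: field_simps)
    have p: "real m \<noteq> 0" using m1 by simp
    have "(1 - \<alpha>) * \<sigma> = (2 * real m + 1) * (real m + 1 - x) / x"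
      unfolding om sg using frac_cancel[OF p, of x "real m + 1 - x" "2 * real m + 1"] x0 by simp
    thus ?thesis using False unfolding h_def by simp
  qed
  have img: "Gf m x h cond \<alpha> ` {1..Suc m} = insert (Gf m x h cond \<alpha> (Suc m)) (Gf m x h cond \<alpha> ` {1..m})"
    using m1 by (auto simp: atLeastAtMostSuc_conv)
  have T: "Gf m x h cond \<alpha> (Suc m) = mix \<alpha> (UO (m + 1)) (UO m)" unfolding Gf_def by simp
  have XS: "(if cond then {mix (\<alpha> * \<delta>) (V m j) (UO m) | j. 1 \<le> j \<and> j \<le> m}
            else {mix ((1 - \<alpha>) * \<sigma>) (V m j) (UO (m + 1)) | j. 1 \<le> j \<and> j \<le> m}) = Gf m x h cond \<alpha> ` {1..m}"
    using coef unfolding Gf_def by (cases cond) (auto simp: image_def)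
  show "insert (mix \<alpha> (UO (m + 1)) (UO m)) (if cond then {mix (\<alpha> * \<delta>) (V m j) (UO m) | j. 1 \<le> j \<and> j \<le> m}
            else {mix ((1 - \<alpha>) * \<sigma>) (V m j) (UO (m + 1)) | j. 1 \<le> j \<and> j \<le> m})
         = Gf m x h cond \<alpha> ` {1..Suc m}" unfolding img T XS ..
  show "\<And>j k. j \<in> {1..Suc m} \<Longrightarrow> pmf (Gf m x h cond \<alpha> j) k = rg m x h j k / x"
  proof -
    fix j k assume j: "j \<in> {1..Suc m}"
    show "pmf (Gf m x h cond \<alpha> j) k = rg m x h j k / x"
    proof (cases "j \<le> m")
      case True
      have cs: "(h = x - real m \<and> (if cond then m else m + 1) = m) \<or> (h = real m + 1 - x \<and> (if cond then m else m + 1) = m + 1)"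
        unfolding h_def by auto
      show ?thesis unfolding Gf_def using True gen_pmf_V[OF m1 _ True x0 h0 hh cs] j by simp
    next
      case False
      hence "j = Suc m" using j by simp
      thus ?thesis unfolding Gf_def using gen_pmf_T[OF m1 x, of k h] al by simp
    qed
  qed
qed

lemma conv_member:
  fixes X :: "nat pmf" and x \<alpha> \<delta> \<sigma> :: real and m :: nat and cond :: bool
  assumes m1: "1 \<le> m" and x: "real m < x" "x < real m + 1"
    and Dle: "\<forall>k. Dg (\<lambda>k. x * pmf X k) k \<le> 0" and Deq: "\<forall>i\<le>m. Dg (\<lambda>k. x * pmf X k) (2*i) = 0"
    and p0: "pmf X 0 = 0" and pbig: "\<forall>k. 2*m+1 < k \<longrightarrow> pmf X k = 0"
    and al: "\<alpha> = (real m + 1) * (x - real m) / x"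
    and dl: "\<delta> = (2 * real m + 1) / (real m + 1)" and sg: "\<sigma> = (2 * real m + 1) / real m"
    and cd: "cond \<longleftrightarrow> x \<le> real m + 1/2"
  shows "X \<in> conv_pmf (insert (mix \<alpha> (UO (m + 1)) (UO m)) (if cond then {mix (\<alpha> * \<delta>) (V m j) (UO m) | j. 1 \<le> j \<and> j \<le> m}
            else {mix ((1 - \<alpha>) * \<sigma>) (V m j) (UO (m + 1)) | j. 1 \<le> j \<and> j \<le> m}))"
proof -
  define h where "h = (if cond then x - real m else real m + 1 - x)"
  note G = gens[OF m1 x al dl sg cd, folded h_def]
  define r where "r k = x * pmf X k" for k
  have x0: "0 < x" using x by linarith
  have sXN: "set_pmf X \<subseteq> {..<2*m+2}"
  proof
    fix k assume "k \<in> set_pmf X" hence "pmf X k \<noteq> 0" by (simp add: set_pmf_iff)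
    thus "k \<in> {..<2*m+2}" using pbig by (cases "2*m+1 < k") auto
  qed
  have rsum: "(\<Sum>k<2*m+2. r k) = x"
  proof -
    have "(\<Sum>k<2*m+2. r k) = x * (\<Sum>k<2*m+2. pmf X k)" unfolding r_def by (rule sum_distrib_left[symmetric])
    thus ?thesis using sum_pmf_eq_1[OF _ sXN] by simp
  qed
  have hc: "h = x - real m \<or> h = real m + 1 - x" unfolding h_def by auto
  have hd: "\<exists>lam. (\<forall>j. 0 \<le> lam j) \<and> (\<Sum>j\<in>{1..Suc m}. lam j) = 1
    \<and> (\<forall>k. r k = (\<Sum>j\<in>{1..Suc m}. lam j * rg m x h j k))"
  proof (rule hull_decomp[where r=r and n=m and x=x and h=h])
    show "1 \<le> m" by (rule m1)
    show "r 0 = 0" unfolding r_def using p0 by simp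
    show "\<And>k. 2*m+1 < k \<Longrightarrow> r k = 0" unfolding r_def using pbig by simp
    show "(\<Sum>k<2*m+2. r k) = x" by (rule rsum)
    show "\<And>i. i \<le> m \<Longrightarrow> Dg r (2*i) = 0" unfolding r_def using Deq by simp
    show "\<And>k. Dg r k \<le> 0" unfolding r_def using Dle by simp
    show "\<And>k. 0 \<le> r k" unfolding r_def using x0 by simp
    show "0 < h" by (rule G(3))
    show "h = x - real m \<or> h = real m + 1 - x" by (rule hc)
  qed
  then obtain lam where l0: "\<And>j. 0 \<le> lam j" and l1: "(\<Sum>j\<in>{1..Suc m}. lam j) = 1"
    and l2: "\<And>k. r k = (\<Sum>j\<in>{1..Suc m}. lam j * rg m x h j k)" by blast
  show ?thesis unfolding G(1)
  proof (rule conv_intro[where w=lam and G="Gf m x h cond \<alpha>" and J="{1..Suc m}"])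
    show "finite {1..Suc m}" by simp
    show "\<And>j. j \<in> {1..Suc m} \<Longrightarrow> 0 \<le> lam j" using l0 by simp
    show "(\<Sum>j\<in>{1..Suc m}. lam j) = 1" using l1 .
    show "\<And>j. j \<in> {1..Suc m} \<Longrightarrow> Gf m x h cond \<alpha> j \<in> Gf m x h cond \<alpha> ` {1..Suc m}" by simp
    fix k
    have "pmf X k = r k / x" unfolding r_def using x0 by simp
    also have "\<dots> = (\<Sum>j\<in>{1..Suc m}. lam j * (rg m x h j k / x))"
      unfolding l2 by (simp only: sum_divide_distrib times_divide_eq_right)
    also have "\<dots> = (\<Sum>j\<in>{1..Suc m}. lam j * pmf (Gf m x h cond \<alpha> j) k)"
      using G(2) by (intro sum.cong refl) simp
    finally show "pmf X k = (\<Sum>j\<in>{1..Suc m}. lam j * pmf (Gf m x h cond \<alpha> j) k)" .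
  qed
qed


lemma Ypmf:
  fixes y :: real and m :: nat
  assumes m1: "1 \<le> m" and ym: "real m + 1 < y"
  shows "pmf (mix ((real m + 1) / y) (UE m) (return_pmf 0)) k
       = (if k = 0 then (y - real m) / y else if even k \<and> k \<le> 2*m then 1 / y else 0)"
proof -
  have y0: "0 < y" using ym by linarith
  have l0: "0 \<le> (real m + 1) / y" using y0 by simp
  have l1: "(real m + 1) / y \<le> 1" using ym y0 by simp
  have np: "real m + 1 \<noteq> 0" by linarith
  have a: "(real m + 1) / y * (1 / (real m + 1)) = 1 / y" using np by simp
  have pm: "pmf (mix ((real m + 1) / y) (UE m) (return_pmf 0)) k
      = (real m + 1) / y * pmf (UE m) k + (1 - (real m + 1) / y) * pmf (return_pmf 0) k"
    by (rule pmf_mix[OF l0 l1])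
  show ?thesis
  proof (cases "k = 0")
    case True
    have "(real m + 1) / y * (1 / (real m + 1)) + (1 - (real m + 1) / y) = (y - real m) / y"
      unfolding a using y0 by (simp add: field_simps)
    thus ?thesis using True pm by (simp add: pmf_UE)
  next
    case False thus ?thesis using a pm by (auto simp: indicator_def pmf_UE)
  qed
qed

lemma u1_gen:
  assumes "\<And>i. pmf G i = f i / x" and "0 < x"
  shows "u1 (2*x) G k = Dg f k"
  unfolding u1_def Dg_def assms using assms(2) by (simp add: sum_divide_distrib[symmetric])

theorem proposition6:
  fixes v1 v2 :: real and m :: nat and b \<alpha> :: real and X Y :: "nat pmf"
  assumes "v1 \<ge> v2" and "v2 > 0"
    and "m \<ge> 1" and "0 < b" and "b < real m"
    and "0 < \<alpha>" and "\<alpha> < 1"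
    and "strategy X" and "strategy Y"
    and "mean X = real m + \<alpha>" and "mean Y = b"
  shows "(nash v1 v2 X Y \<longleftrightarrow>
      (let c = \<lceil>v2 / 2\<rceil>;
           \<delta> = (2 * real_of_int c - 1) / real_of_int c;
           \<sigma> = (2 * real_of_int c - 1) / (real_of_int c - 1);
           XS = (if v2 / 2 \<le> real_of_int c - 1 / 2
                 then {mix (\<alpha> * \<delta>) (V m j) (UO m) | j. 1 \<le> j \<and> j \<le> m}
                 else {mix ((1 - \<alpha>) * \<sigma>) (V m j) (UO (m + 1)) | j. 1 \<le> j \<and> j \<le> m})
       in v1 / 2 > real_of_int c \<and> real_of_int c > v2 / 2 \<and>
          int m = c - 1 \<and>
          b = (real_of_int c - 1) * real_of_int c / (v1 / 2) \<and>
          \<alpha> = real_of_int c / (v2 / 2) * (v2 / 2 - real_of_int \<lfloor>v2 / 2\<rfloor>) \<and>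
          Y = mix (b / real m) (UE m) (return_pmf 0) \<and>
          X \<in> conv_pmf (insert (mix \<alpha> (UO (m + 1)) (UO m)) XS)))
    \<and> (nash v1 v2 X Y \<longrightarrow>
         payoff1 v1 X Y = v1 + 1 - 2 * real_of_int \<lceil>v2 / 2\<rceil> \<and> payoff2 v2 Y X = 0)"
proof -
  note A = assms
  have m1: "1 \<le> m" using A by simp
  have v10: "0 < v1" using A by simp
  define x where "x = v2 / 2"
  define y where "y = v1 / 2"
  have x0: "0 < x" unfolding x_def using A by simp
  have y0: "0 < y" unfolding y_def using A by simp
  have fwdc: "real m < x \<and> x < real m + 1 \<and> real m + 1 < y \<and> y * b = real m * (real m + 1)
    \<and> x * \<alpha> = (real m + 1) * (x - real m)
    \<and> (\<forall>k. y * pmf Y k = (if k = 0 then y - real m else if even k \<and> k \<le> 2*m then 1 else 0))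
    \<and> payoff1 v1 X Y = v1 - 2 * real m - 1 \<and> payoff2 v2 Y X = 0
    \<and> (\<forall>k. Dg (\<lambda>k. x * pmf X k) k \<le> 0) \<and> (\<forall>i\<le>m. Dg (\<lambda>k. x * pmf X k) (2*i) = 0)
    \<and> pmf X 0 = 0 \<and> (\<forall>k. 2*m+1 < k \<longrightarrow> pmf X k = 0)" if NE: "nash v1 v2 X Y"
    using fwd_core[OF A(1,2) m1 A(4,5,6,7,8,9,10,11) NE] unfolding x_def y_def by simp
  have ceq: "\<lceil>x\<rceil> = int m + 1" if "real m < x" "x < real m + 1" for x
    using that by (intro ceiling_eq) auto
  have feq: "\<lfloor>x\<rfloor> = int m" if "real m < x" "x < real m + 1" for x
    using that by (intro floor_unique) auto
  show ?thesis unfolding Let_def x_def[symmetric] y_def[symmetric]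
  proof (intro conjI iffI impI)
    assume NE: "nash v1 v2 X Y"
    note F = fwdc[OF NE]
    have c: "\<lceil>x\<rceil> = int m + 1" using ceq F by blast
    have fl: "\<lfloor>x\<rfloor> = int m" using feq F by blast
    show "payoff1 v1 X Y = v1 + 1 - 2 * real_of_int \<lceil>x\<rceil>" using F c by simp
    show "payoff2 v2 Y X = 0" using F by simp
    show "real_of_int \<lceil>x\<rceil> < y" using F c by simp
    show "x < real_of_int \<lceil>x\<rceil>" using F c by simp
    show "int m = \<lceil>x\<rceil> - 1" using c by simp
    show "b = (real_of_int \<lceil>x\<rceil> - 1) * real_of_int \<lceil>x\<rceil> / y" using F c y0 by (simp add: field_simps)
    show "\<alpha> = real_of_int \<lceil>x\<rceil> / x * (x - real_of_int \<lfloor>x\<rfloor>)" using F c fl x0 by (simp add: field_simps)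
    have bv: "b = real m * (real m + 1) / y" using F y0 by (simp add: field_simps)
    show "Y = mix (b / real m) (UE m) (return_pmf 0)"
    proof (rule pmf_eqI)
      fix k
      have yk: "y * pmf Y k = (if k = 0 then y - real m else if even k \<and> k \<le> 2*m then 1 else 0)"
        using F by blast
      have "pmf Y k = (y * pmf Y k) / y" using y0 by simp
      also have "\<dots> = (if k = 0 then (y - real m) / y else if even k \<and> k \<le> 2*m then 1 / y else 0)"
        unfolding yk by simp
      finally have "pmf Y k = (if k = 0 then (y - real m) / y else if even k \<and> k \<le> 2*m then 1 / y else 0)" .
      moreover have "b / real m = (real m + 1) / y" using bv m1 by simp
      ultimately show "pmf Y k = pmf (mix (b / real m) (UE m) (return_pmf 0)) k"
        using Ypmf[OF m1, of y k] F by simp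
    qed
    show "X \<in> conv_pmf (insert (mix \<alpha> (UO (m + 1)) (UO m))
      (if x \<le> real_of_int \<lceil>x\<rceil> - 1 / 2
       then {mix (\<alpha> * ((2 * real_of_int \<lceil>x\<rceil> - 1) / real_of_int \<lceil>x\<rceil>)) (V m j) (UO m) | j. 1 \<le> j \<and> j \<le> m}
       else {mix ((1 - \<alpha>) * ((2 * real_of_int \<lceil>x\<rceil> - 1) / (real_of_int \<lceil>x\<rceil> - 1))) (V m j) (UO (m + 1)) | j. 1 \<le> j \<and> j \<le> m}))"
    proof (rule conv_member[OF m1])
      show "real m < x" "x < real m + 1" using F by auto
      show "\<forall>k. Dg (\<lambda>k. x * pmf X k) k \<le> 0" "\<forall>i\<le>m. Dg (\<lambda>k. x * pmf X k) (2*i) = 0"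
        "pmf X 0 = 0" "\<forall>k. 2*m+1 < k \<longrightarrow> pmf X k = 0" using F by auto
      show "\<alpha> = (real m + 1) * (x - real m) / x" using F x0 by (simp add: field_simps)
      show "(2 * real_of_int \<lceil>x\<rceil> - 1) / real_of_int \<lceil>x\<rceil> = (2 * real m + 1) / (real m + 1)" using c by simp
      show "(2 * real_of_int \<lceil>x\<rceil> - 1) / (real_of_int \<lceil>x\<rceil> - 1) = (2 * real m + 1) / real m" using c by simp
      show "(x \<le> real_of_int \<lceil>x\<rceil> - 1 / 2) \<longleftrightarrow> x \<le> real m + 1/2" using c by (simp add: ac_simps)
    qed
  next
    assume H: "real_of_int \<lceil>x\<rceil> < y \<and> x < real_of_int \<lceil>x\<rceil> \<and> int m = \<lceil>x\<rceil> - 1 \<and>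
      b = (real_of_int \<lceil>x\<rceil> - 1) * real_of_int \<lceil>x\<rceil> / y \<and>
      \<alpha> = real_of_int \<lceil>x\<rceil> / x * (x - real_of_int \<lfloor>x\<rfloor>) \<and>
      Y = mix (b / real m) (UE m) (return_pmf 0) \<and>
      X \<in> conv_pmf (insert (mix \<alpha> (UO (m + 1)) (UO m))
      (if x \<le> real_of_int \<lceil>x\<rceil> - 1 / 2
       then {mix (\<alpha> * ((2 * real_of_int \<lceil>x\<rceil> - 1) / real_of_int \<lceil>x\<rceil>)) (V m j) (UO m) | j. 1 \<le> j \<and> j \<le> m}
       else {mix ((1 - \<alpha>) * ((2 * real_of_int \<lceil>x\<rceil> - 1) / (real_of_int \<lceil>x\<rceil> - 1))) (V m j) (UO (m + 1)) | j. 1 \<le> j \<and> j \<le> m}))"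
    have c: "\<lceil>x\<rceil> = int m + 1" using H by simp
    have xm: "real m < x" using c ceiling_eq_iff[of x "int m + 1"] by simp
    have xm1: "x < real m + 1" using H c by simp
    have ym: "real m + 1 < y" using H c by simp
    have fl: "\<lfloor>x\<rfloor> = int m" using feq xm xm1 by blast
    have bv: "b = real m * (real m + 1) / y" using H c by simp
    have al: "\<alpha> = (real m + 1) * (x - real m) / x" using H c fl by simp
    have Yeq: "Y = mix (b / real m) (UE m) (return_pmf 0)" using H by simp
    define cond where "cond = (x \<le> real_of_int \<lceil>x\<rceil> - 1 / 2)"
    define \<delta> where "\<delta> = (2 * real_of_int \<lceil>x\<rceil> - 1) / real_of_int \<lceil>x\<rceil>"
    define \<sigma> where "\<sigma> = (2 * real_of_int \<lceil>x\<rceil> - 1) / (real_of_int \<lceil>x\<rceil> - 1)"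
    have Xc: "X \<in> conv_pmf (insert (mix \<alpha> (UO (m + 1)) (UO m))
      (if cond then {mix (\<alpha> * \<delta>) (V m j) (UO m) | j. 1 \<le> j \<and> j \<le> m}
       else {mix ((1 - \<alpha>) * \<sigma>) (V m j) (UO (m + 1)) | j. 1 \<le> j \<and> j \<le> m}))"
      using H unfolding cond_def \<delta>_def \<sigma>_def by blast
    have dl: "\<delta> = (2 * real m + 1) / (real m + 1)" unfolding \<delta>_def c by simp
    have sg: "\<sigma> = (2 * real m + 1) / real m" unfolding \<sigma>_def c by simp
    have cd: "cond \<longleftrightarrow> x \<le> real m + 1/2" unfolding cond_def c by (simp add: ac_simps)
    define h where "h = (if cond then x - real m else real m + 1 - x)"
    note G = gens[OF m1 xm xm1 al dl sg cd, folded h_def]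
    have Xc': "X \<in> conv_pmf (Gf m x h cond \<alpha> ` {1..Suc m})" using Xc unfolding G(1) .
    have v2x: "v2 = 2 * x" unfolding x_def by simp
    have v1y: "v1 = 2 * y" unfolding y_def by simp
    have genD: "u1 v2 G k \<le> 0" "\<And>i. i \<le> m \<Longrightarrow> u1 v2 G (2*i) = 0" "set_pmf G \<subseteq> {1..2*m+1}"
      if Gin: "G \<in> Gf m x h cond \<alpha> ` {1..Suc m}" for G k
    proof -
      obtain j where j: "j \<in> {1..Suc m}" "G = Gf m x h cond \<alpha> j" using Gin by blast
      have pg: "\<And>i. pmf G i = rg m x h j i / x" using G(2) j by simp
      have u: "\<And>k. u1 v2 G k = Dg (rg m x h j) k" unfolding v2x by (rule u1_gen[OF pg x0])
      have gd: "Dg (rg m x h j) k \<le> 0" "\<And>i. i \<le> m \<Longrightarrow> Dg (rg m x h j) (2*i) = 0"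
        using gen_D(1)[where j=j and n=m and h=h and x=x and k=k] gen_D(2)[where j=j and n=m and h=h and x=x]
          j m1 G(3,5) xm1 by auto
      show "u1 v2 G k \<le> 0" using u gd by simp
      show "\<And>i. i \<le> m \<Longrightarrow> u1 v2 G (2*i) = 0" using u gd by simp
      show "set_pmf G \<subseteq> {1..2*m+1}"
      proof
        fix i assume "i \<in> set_pmf G"
        hence "rg m x h j i \<noteq> 0" using pg by (simp add: set_pmf_iff)
        thus "i \<in> {1..2*m+1}" using rg_zero[of m x h j] rg_big[of m i x h j] by (cases "i = 0"; cases "2*m+1 < i") auto
      qed
    qed
    have uX1: "\<And>k. u1 v2 X k \<le> 0" using conv_props(1)[OF Xc'] genD(1) by blast
    have uX2: "\<And>i. i \<le> m \<Longrightarrow> u1 v2 X (2*i) = 0" using conv_props(2)[OF Xc'] genD(2) by blast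
    have sX: "set_pmf X \<subseteq> {1..2*m+1}" using conv_props(3)[OF Xc'] genD(3) by blast
    define s where "s k = (if k = 0 then y - real m else if even k \<and> k \<le> 2*m then 1 else 0)" for k
    have bm: "b / real m = (real m + 1) / y" using bv m1 by simp
    have pY: "pmf Y k = s k / y" for k
      unfolding Yeq bm Ypmf[OF m1 ym] s_def by auto
    have uY: "u1 v1 Y k = 2 * (\<Sum>i<k. s i) + s k - real k" for k
      unfolding v1y u1_def pY using y0 by (simp add: sum_divide_distrib[symmetric])
    have Yp1: "u1 v1 Y k \<le> 2*y - 2*real m - 1" for k using Yprof(1)[OF s_def ym] uY by simp
    have Yp2: "u1 v1 Y k = 2*y - 2*real m - 1" if "k \<in> set_pmf X" for k
      using Yprof(2)[OF s_def ym] uY sX that by auto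
    have Xp2: "u1 v2 X k = 0" if "k \<in> set_pmf Y" for k
    proof -
      have "s k \<noteq> 0" using that pY by (auto simp: set_pmf_iff)
      hence "even k \<and> k \<le> 2*m" unfolding s_def by (auto split: if_splits)
      then obtain i where "k = 2*i" "i \<le> m" by (auto elim: evenE)
      thus ?thesis using uX2 by simp
    qed
    show "nash v1 v2 X Y"
      using nash_of_pointwise(1)[OF A(8) A(9) Yp1 Yp2 uX1 Xp2] .
  qed
qed


end
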